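(* Let $\psi$ be an admissible modulus and $\varphi$ an admissible order function with $I_\psi\subset(0,1)$, $M_\varphi<1$, $I_{\varphi\psi}\subset(0,1)\cup(1,2)$, $[m_{\varphi\psi},M_{\varphi\psi}]\cap\mathbb{N}=\emptyset$ and $\max(M_\varphi,M_\psi)<m_{\varphi\psi}$. Let $a:\mathbb{R}^d\times\mathbb{R}^d\to[\Lambda_1,\Lambda_2]$ ($0<\Lambda_1\le\Lambda_2$) satisfy $\sup_x\sup_{|h|>0}|a(x+z,h)-a(x,h)|\le\Lambda_3\psi(|z|)$ for $|z|\le1$, with $\Lambda_3\ge1$. For $x_0\in\mathbb{R}^d$ set $b(x,h)=a(x,h)-a(x_0,h)$ and $$\mathcal{B}v(x)=\int_{\mathbb{R}^d}(v(x+h)-v(x))\frac{b(x,h)}{|h|^d\varphi(|h|)}\,dh.$$ Then for every $\varepsilon>0$ there exist $r=r(\varepsilon)\in(0,1/4)$ and $C=C(\varepsilon)>0$ such that for every $x_0\in\mathbb{R}^d$ and every $v\in C^{\varphi\psi}(\mathbb{R}^d)$ with support in $B(x_0,2r)$, $$\|\mathcal{B}v\|_{C^\psi}\le C\|v\|_{C^0}+\varepsilon\|v\|_{C^{\varphi\psi}}.$$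
   Context: Almost increasing/decreasing: $g:(0,1]\to(0,\infty)$ is almost increasing if $c\,g(r)\le g(R)$ for some $c\in(0,1]$ and all $0<r\le R\le1$, almost decreasing if $g(R)\le Cg(r)$ for some $C\ge1$ and all $0<r\le R\le1$. $M_g=\inf\{\alpha: g(r)/r^\alpha\text{ almost decreasing}\}$, $m_g=\sup\{\alpha: g(r)/r^\alpha\text{ almost increasing}\}$, $I_g=[m_g,M_g]$. Admissible modulus: $\psi:(0,1]\to(0,\infty)$, $\psi(1)=1$, $\psi(r)\to0$ as $r\to0+$. Admissible order function: smooth $\varphi:(0,\infty)\to(0,\infty)$, $\varphi(1)=1$, with $\phi(r)=\varphi(r^{-1/2})^{-1}$ a Bernstein function ($\phi\ge0$, $C^\infty$, $(-1)^n\phi^{(n)}\le0$ for $n\ge1$) and $a_1\lambda^{2\delta_1}\varphi(r)\le\varphi(\lambda r)\le a_2\lambda^{2\delta_2}\varphi(r)$ for $\lambda\ge1,r>0$, some $0<\delta_1\le\delta_2<1$, $a_1\in(0,1]$, $a_2\ge1$. Indices of $\varphi$ refer to its restriction to $(0,1]$; $\varphi\psi$ is the product on $(0,1]$. $\mathbb{N}=\{1,2,\dots\}$. $\|f\|_{C^0}=\sup|f|$, $\|D^jf\|_{C^0}=\max_{|\gamma|=j}\|D^\gamma f\|_{C^0}$; $[f]_{C^{-j;g}}=\sup_x\sup_{0<|h|\le1}\frac{|f(x+h)-f(x)|}{g(|h|)|h|^{-j}}$. If $m_g\in(k,k+1]$, $k\in\mathbb{N}_0$, $C^g(\mathbb{R}^d)$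 is the set of continuous $f$ with $D^\gamma f$ bounded continuous for $|\gamma|\le k$ and $[D^\gamma f]_{C^{-k;g}}<\infty$ for $|\gamma|=k$, norm $\|f\|_{C^g}=\sum_{j\le k}\|D^jf\|_{C^0}+\max_{|\gamma|=k}[D^\gamma f]_{C^{-k;g}}$. *)

theory Defs
  imports "HOL-Analysis.Analysis"
begin

definition almost_increasing :: "(real \<Rightarrow> real) \<Rightarrow> bool" where
  "almost_increasing g \<longleftrightarrow>
     (\<exists>c. 0 < c \<and> c \<le> 1 \<and> (\<forall>r R. 0 < r \<and> r \<le> R \<and> R \<le> 1 \<longrightarrow> c * g r \<le> g R))"

definition almost_decreasing :: "(real \<Rightarrow> real) \<Rightarrow> bool" where
  "almost_decreasing g \<longleftrightarrow>
     (\<exists>C. 1 \<le> C \<and> (\<forall>r R. 0 < r \<and> r \<le> R \<and> R \<le> 1 \<longrightarrow> g R \<le> C * g r))"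

text \<open>Upper index M_g and lower index m_g, valued in the extended reals
  (inf of the empty set is +infinity, sup of the empty set is -infinity).\<close>

definition upper_index :: "(real \<Rightarrow> real) \<Rightarrow> ereal" where
  "upper_index g = Inf {ereal \<alpha> | \<alpha>. almost_decreasing (\<lambda>r. g r / r powr \<alpha>)}"

definition lower_index :: "(real \<Rightarrow> real) \<Rightarrow> ereal" where
  "lower_index g = Sup {ereal \<alpha> | \<alpha>. almost_increasing (\<lambda>r. g r / r powr \<alpha>)}"

definition admissible_modulus :: "(real \<Rightarrow> real) \<Rightarrow> bool" where
  "admissible_modulus \<psi> \<longleftrightarrow>
     (\<forall>r. 0 < r \<and> r \<le> 1 \<longrightarrow> 0 < \<psi> r) \<and> \<psi> 1 = 1 \<and> (\<psi> \<longlongrightarrow> 0) (at_right 0)"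

definition smooth_on :: "real set \<Rightarrow> (real \<Rightarrow> real) \<Rightarrow> bool" where
  "smooth_on S f \<longleftrightarrow> (\<forall>n. \<forall>x\<in>S. (deriv ^^ n) f differentiable (at x))"

definition bernstein_function :: "(real \<Rightarrow> real) \<Rightarrow> bool" where
  "bernstein_function f \<longleftrightarrow>
     smooth_on {0<..} f \<and> (\<forall>r>0. 0 \<le> f r) \<and>
     (\<forall>n\<ge>1. \<forall>r>0. (-1) ^ n * (deriv ^^ n) f r \<le> 0)"

definition admissible_order_function :: "(real \<Rightarrow> real) \<Rightarrow> bool" where
  "admissible_order_function \<phi> \<longleftrightarrow>
     smooth_on {0<..} \<phi> \<and> (\<forall>r>0. 0 < \<phi> r) \<and> \<phi> 1 = 1 \<and>
     bernstein_function (\<lambda>r. inverse (\<phi> (r powr (-1/2)))) \<and>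
     (\<exists>\<delta>1 \<delta>2 a1 a2. 0 < \<delta>1 \<and> \<delta>1 \<le> \<delta>2 \<and> \<delta>2 < 1 \<and> 0 < a1 \<and> a1 \<le> 1 \<and> 1 \<le> a2 \<and>
        (\<forall>lam r. 1 \<le> lam \<and> 0 < r \<longrightarrow>
            a1 * lam powr (2 * \<delta>1) * \<phi> r \<le> \<phi> (lam * r) \<and>
            \<phi> (lam * r) \<le> a2 * lam powr (2 * \<delta>2) * \<phi> r))"

definition partial_deriv :: "('a::euclidean_space \<Rightarrow> real) \<Rightarrow> 'a \<Rightarrow> 'a \<Rightarrow> real" where
  "partial_deriv f i x = deriv (\<lambda>t. f (x + t *\<^sub>R i)) 0"

definition has_partial :: "('a::euclidean_space \<Rightarrow> real) \<Rightarrow> 'a \<Rightarrow> bool" where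
  "has_partial f i \<longleftrightarrow> (\<forall>x. (\<lambda>t. f (x + t *\<^sub>R i)) differentiable (at 0))"

text \<open>D^gamma f, a multi-index being represented as a list of basis vectors.\<close>

fun Dmulti :: "'a::euclidean_space list \<Rightarrow> ('a \<Rightarrow> real) \<Rightarrow> 'a \<Rightarrow> real" where
  "Dmulti [] f = f"
| "Dmulti (i # \<gamma>) f = partial_deriv (Dmulti \<gamma> f) i"

definition multi_indices :: "nat \<Rightarrow> 'a::euclidean_space list set" where
  "multi_indices j = {\<gamma>. set \<gamma> \<subseteq> Basis \<and> length \<gamma> = j}"

definition C0_norm :: "('a \<Rightarrow> real) \<Rightarrow> real" where
  "C0_norm f = (SUP x. \<bar>f x\<bar>)"

definition Dj_norm :: "nat \<Rightarrow> ('a::euclidean_space \<Rightarrow> real) \<Rightarrow> real" where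
  "Dj_norm j f = Max ((\<lambda>\<gamma>. C0_norm (Dmulti \<gamma> f)) ` multi_indices j)"

definition holder_quotients :: "(real \<Rightarrow> real) \<Rightarrow> nat \<Rightarrow> ('a::real_normed_vector \<Rightarrow> real) \<Rightarrow> real set" where
  "holder_quotients g j f =
     {\<bar>f (x + h) - f x\<bar> / (g (norm h) * inverse (norm h ^ j)) | x h. 0 < norm h \<and> norm h \<le> 1}"

definition holder_seminorm :: "(real \<Rightarrow> real) \<Rightarrow> nat \<Rightarrow> ('a::real_normed_vector \<Rightarrow> real) \<Rightarrow> real" where
  "holder_seminorm g j f = Sup (holder_quotients g j f)"

text \<open>The integer k with m_g in (k, k+1].\<close>
definition holder_order :: "(real \<Rightarrow> real) \<Rightarrow> nat" where
  "holder_order g = nat (\<lceil>real_of_ereal (lower_index g)\<rceil> - 1)"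

definition in_C :: "(real \<Rightarrow> real) \<Rightarrow> ('a::euclidean_space \<Rightarrow> real) \<Rightarrow> bool" where
  "in_C g f \<longleftrightarrow>
     (\<forall>\<gamma>. set \<gamma> \<subseteq> Basis \<and> length \<gamma> \<le> holder_order g \<longrightarrow>
        continuous_on UNIV (Dmulti \<gamma> f) \<and> bounded (range (Dmulti \<gamma> f)) \<and>
        (length \<gamma> < holder_order g \<longrightarrow> (\<forall>i\<in>Basis. has_partial (Dmulti \<gamma> f) i))) \<and>
     (\<forall>\<gamma>\<in>multi_indices (holder_order g). bdd_above (holder_quotients g (holder_order g) (Dmulti \<gamma> f)))"

definition C_norm :: "(real \<Rightarrow> real) \<Rightarrow> ('a::euclidean_space \<Rightarrow> real) \<Rightarrow> real" where
  "C_norm g f =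
     (\<Sum>j\<le>holder_order g. Dj_norm j f) +
     Max ((\<lambda>\<gamma>. holder_seminorm g (holder_order g) (Dmulti \<gamma> f)) ` multi_indices (holder_order g))"

definition op_B :: "('a::euclidean_space \<Rightarrow> 'a \<Rightarrow> real) \<Rightarrow> (real \<Rightarrow> real) \<Rightarrow> 'a \<Rightarrow> ('a \<Rightarrow> real) \<Rightarrow> 'a \<Rightarrow> real" where
  "op_B a \<phi> x0 v x =
     (\<integral>h. (v (x + h) - v x) * (a x h - a x0 h) / (norm h ^ DIM('a) * \<phi> (norm h)) \<partial>lborel)"

end

theory Submission
  imports Defs
begin


lemma lower_index_ex:
  assumes "ereal b < lower_index g"
  shows "\<exists>\<alpha>>b. almost_increasing (\<lambda>r. g r / r powr \<alpha>)"
  using assms unfolding lower_index_def less_Sup_iff by auto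

lemma upper_index_ex:
  assumes "upper_index g < ereal b"
  shows "\<exists>\<alpha><b. almost_decreasing (\<lambda>r. g r / r powr \<alpha>)"
  using assms unfolding upper_index_def Inf_less_iff by auto

lemma ai_pair_le:
  fixes g :: "real \<Rightarrow> real"
  assumes pos: "\<forall>r. 0<r \<and> r\<le>1 \<longrightarrow> 0 < g r"
    and ai: "almost_increasing (\<lambda>r. g r / r powr \<alpha>)"
    and ad: "almost_decreasing (\<lambda>r. g r / r powr \<beta>)"
  shows "\<alpha> \<le> \<beta>"
proof (rule ccontr)
  assume "\<not> \<alpha> \<le> \<beta>"
  hence ab: "0 < \<alpha> - \<beta>" by simp
  obtain c where c: "0 < c" "c \<le> 1" "\<forall>r R. 0 < r \<and> r \<le> R \<and> R \<le> 1 \<longrightarrow> c * (g r / r powr \<alpha>) \<le> g R / R powr \<alpha>"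
    using ai unfolding almost_increasing_def by auto
  obtain C where C: "1 \<le> C" "\<forall>r R. 0 < r \<and> r \<le> R \<and> R \<le> 1 \<longrightarrow> g R / R powr \<beta> \<le> C * (g r / r powr \<beta>)"
    using ad unfolding almost_decreasing_def by auto
  define q where "q = c / (2*C)"
  have q: "0 < q" "q < 1" using c C by (auto simp: q_def field_simps)
  define r where "r = q powr (1/(\<alpha>-\<beta>))"
  have r: "0 < r" "r < 1" using q ab powr_less_mono2[of "1/(\<alpha>-\<beta>)" q 1] by (auto simp: r_def)
  have rq: "r powr (\<alpha>-\<beta>) = q" using q ab by (simp add: r_def powr_powr)
  have 1: "c * (g r / r powr \<alpha>) \<le> g 1" using c(3)[rule_format, of r 1] r by simp
  have 2: "g 1 \<le> C * (g r / r powr \<beta>)" using C(2)[rule_format, of r 1] r by simp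
  have gr: "0 < g r" using pos r by auto
  have "c * (g r / r powr \<alpha>) \<le> C * (g r / r powr \<beta>)" using 1 2 by linarith
  hence "c * g r * r powr \<beta> \<le> C * g r * r powr \<alpha>" using r by (simp add: field_simps)
  hence "c * r powr \<beta> \<le> C * r powr \<alpha>" using gr by (simp add: mult.commute mult.left_commute)
  moreover have "r powr \<alpha> = r powr \<beta> * q" using rq r by (simp add: powr_diff[symmetric] field_simps)
    (metis diff_add_cancel powr_add)
  ultimately have "c * r powr \<beta> \<le> C * q * r powr \<beta>" by (simp add: mult_ac)
  hence "c \<le> C * q" using r by simp
  thus False using c C by (simp add: q_def)
qed

lemma lower_le_upper:
  fixes g :: "real \<Rightarrow> real"
  assumes pos: "\<forall>r. 0<r \<and> r\<le>1 \<longrightarrow> 0 < g r"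
  shows "lower_index g \<le> upper_index g"
  unfolding lower_index_def upper_index_def
  by (rule Sup_le_iff[THEN iffD2], auto intro!: le_Inf_iff[THEN iffD2] ai_pair_le[OF pos])


lemma pow2_bracket:
  assumes "1 \<le> (t::real)"
  shows "\<exists>k::nat. 2^k \<le> t \<and> t < 2^(k+1)"
proof -
  obtain n where n: "t < 2^n" using real_arch_pow[of 2 t] by auto
  define m where "m = (LEAST n. t < (2::real)^n)"
  have m: "t < 2^m" unfolding m_def by (rule LeastI[of _ n], fact)
  have "m \<noteq> 0"
  proof
    assume "m = 0" with m assms show False by simp
  qed
  then obtain k where k: "m = Suc k" by (cases m) auto
  have "\<not> t < 2^k" using not_less_Least[of k "\<lambda>n. t < (2::real)^n"] k m_def by auto
  thus ?thesis using m k by (intro exI[of _ k]) auto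
qed

lemma ennreal_le_suminf: "(f k :: ennreal) \<le> (\<Sum>i. f i)"
proof -
  have "sum f {k} \<le> suminf f" by (rule sum_le_suminf) (auto intro: summableI)
  thus ?thesis by simp
qed

lemma cball_series_bound:
  fixes f :: "'a::euclidean_space \<Rightarrow> real"
  assumes q: "0 \<le> q" "q < 1" and c: "\<And>k. 0 \<le> c k" and R: "\<And>k. 0 \<le> R k"
    and cR: "\<And>k. c k * R k ^ DIM('a) \<le> B * q ^ k"
    and pt: "\<And>h. f h \<le> 0 \<or> (\<exists>k. f h \<le> c k \<and> norm h \<le> R k)"
  shows "(\<integral>\<^sup>+ h. ennreal (f h) \<partial>lborel) \<le> ennreal (unit_ball_vol DIM('a) * B / (1 - q))"
proof -
  let ?V = "unit_ball_vol DIM('a)"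
  have V: "0 \<le> ?V" by simp
  have "(\<integral>\<^sup>+ h. ennreal (f h) \<partial>lborel) \<le> (\<integral>\<^sup>+ h. (\<Sum>k. ennreal (c k) * indicator (cball (0::'a) (R k)) h) \<partial>lborel)"
  proof (intro nn_integral_mono)
    fix h
    show "ennreal (f h) \<le> (\<Sum>k. ennreal (c k) * indicator (cball 0 (R k)) h)"
    proof (cases "f h \<le> 0")
      case True then show ?thesis by (simp add: ennreal_neg)
    next
      case False
      then obtain k where k: "f h \<le> c k" "norm h \<le> R k" using pt[of h] by auto
      have "ennreal (f h) \<le> ennreal (c k) * indicator (cball 0 (R k)) h"
        using k by (simp add: indicator_def ennreal_leI)
      also have "\<dots> \<le> (\<Sum>k. ennreal (c k) * indicator (cball 0 (R k)) h)"
        by (rule ennreal_le_suminf)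
      finally show ?thesis .
    qed
  qed
  also have "\<dots> = (\<Sum>k. \<integral>\<^sup>+ h. ennreal (c k) * indicator (cball (0::'a) (R k)) h \<partial>lborel)"
    by (rule nn_integral_suminf[of "\<lambda>k h. ennreal (c k) * indicator (cball (0::'a) (R k)) h"])
      (intro borel_measurable_times_ennreal borel_measurable_const borel_measurable_indicator, simp)
  also have "\<dots> = (\<Sum>k. ennreal (c k) * emeasure lborel (cball (0::'a) (R k)))"
    by (subst nn_integral_cmult_indicator) auto
  also have "\<dots> = (\<Sum>k. ennreal (c k * (?V * R k ^ DIM('a))))"
    using R c by (simp add: emeasure_cball ennreal_mult)
  also have "\<dots> \<le> (\<Sum>k. ennreal (?V * B * q ^ k))"
  proof (rule suminf_le)
    fix k
    have "c k * (?V * R k ^ DIM('a)) = ?V * (c k * R k ^ DIM('a))" by simp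
    also have "\<dots> \<le> ?V * (B * q^k)" using cR[of k] V by (rule mult_left_mono)
    finally show "ennreal (c k * (?V * R k ^ DIM('a))) \<le> ennreal (?V * B * q ^ k)"
      by (simp add: ennreal_leI mult.assoc)
  qed (auto intro: summableI)
  also have "\<dots> = ennreal (?V * B / (1 - q))"
  proof (cases "B \<ge> 0")
    case True
    have "(\<lambda>k. ?V * B * q ^ k) sums (?V * B * (1 / (1 - q)))"
      by (rule sums_mult, rule geometric_sums) (use q in auto)
    hence sm: "(\<lambda>k. ?V * B * q ^ k) sums (?V * B / (1 - q))" by simp
    show ?thesis by (rule suminf_ennreal_eq[OF _ sm]) (use True q in auto)
  next
    case False
    have "?V * B \<le> 0" using False V by (simp add: mult_nonneg_nonpos)
    hence "\<And>k. ?V * B * q ^ k \<le> 0" using q by (simp add: mult_nonpos_nonneg)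
    moreover have "?V * B / (1 - q) \<le> 0" using \<open>?V * B \<le> 0\<close> q by (simp add: divide_nonpos_pos)
    ultimately have z: "\<And>k. ennreal (?V * B * q ^ k) = 0" and z2: "ennreal (?V * B / (1 - q)) = 0"
      by (auto intro: ennreal_neg)
    show ?thesis by (simp only: z z2) simp
  qed
  finally show ?thesis .
qed

definition mA :: "real \<Rightarrow> real \<Rightarrow> 'a::euclidean_space \<Rightarrow> real" where
  "mA \<alpha> s h = (if 0 < norm h \<and> norm h \<le> s then inverse (norm h ^ DIM('a)) * (norm h / s) powr \<alpha> else 0)"

definition mB :: "real \<Rightarrow> real \<Rightarrow> 'a::euclidean_space \<Rightarrow> real" where
  "mB \<alpha> s h = (if s < norm h then inverse (norm h ^ DIM('a)) * (s / norm h) powr \<alpha> else 0)"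

lemma mA_nonneg: "0 \<le> mA \<alpha> s h" by (simp add: mA_def)
lemma mB_nonneg: "0 \<le> mB \<alpha> s h" by (simp add: mB_def)

lemma half_pow_powr: "((1/2::real)^k) powr \<alpha> = ((1/2) powr \<alpha>)^k"
  by (simp add: powr_power powr_realpow[symmetric] powr_powr mult.commute)

lemma mA_int:
  assumes "0 < \<alpha>" "0 < s"
  shows "(\<integral>\<^sup>+ h. ennreal (mA \<alpha> s (h::'a::euclidean_space)) \<partial>lborel)
         \<le> ennreal (unit_ball_vol DIM('a) * 2 ^ DIM('a) / (1 - (1/2) powr \<alpha>))"
proof (rule cball_series_bound)
  let ?q = "(1/2::real) powr \<alpha>"
  show "0 \<le> ?q" by simp
  show "?q < 1" using assms powr_less_mono2[of \<alpha> "1/2" 1] by simp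
  let ?c = "\<lambda>k::nat. (2^(k+1)/s)^DIM('a) * ?q^k"
  let ?R = "\<lambda>k::nat. s / 2^k"
  show "\<And>k. 0 \<le> ?c k" using assms by simp
  show "\<And>k. 0 \<le> ?R k" using assms by simp
  show "?c k * ?R k ^ DIM('a) \<le> 2 ^ DIM('a) * ?q ^ k" for k
  proof -
    have "?c k * ?R k ^ DIM('a) = ((2^(k+1)/s)^DIM('a) * (s/2^k)^DIM('a)) * ?q^k"
      by (simp add: mult_ac)
    also have "\<dots> = ((2^(k+1)/s) * (s/2^k))^DIM('a) * ?q^k"
      by (simp only: power_mult_distrib)
    also have "(2^(k+1)/s) * (s/2^k) = (2::real)" using assms by (simp add: field_simps)
    finally show ?thesis by simp
  qed
  show "mA \<alpha> s h \<le> 0 \<or> (\<exists>k. mA \<alpha> s h \<le> ?c k \<and> norm h \<le> ?R k)" for h :: 'a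
  proof (cases "0 < norm h \<and> norm h \<le> s")
    case False thus ?thesis by (auto simp: mA_def)
  next
    case True
    hence nh: "0 < norm h" "norm h \<le> s" by auto
    obtain k :: nat where k: "2^k \<le> s / norm h" "s / norm h < 2^(k+1)"
      using pow2_bracket[of "s / norm h"] nh by auto
    have k1: "norm h \<le> s / 2^k" using k(1) nh by (simp add: field_simps)
    have k2: "s / 2^(k+1) < norm h" using k(2) nh by (simp add: field_simps)
    have "inverse (norm h ^ DIM('a)) = (inverse (norm h))^DIM('a)" by (simp add: power_inverse)
    also have "\<dots> \<le> (2^(k+1)/s)^DIM('a)"
    proof (rule power_mono)
      show "inverse (norm h) \<le> 2^(k+1)/s" using k2 nh assms
        by (simp add: field_simps)
    qed (use nh in simp)
    finally have i1: "inverse (norm h ^ DIM('a)) \<le> (2^(k+1)/s)^DIM('a)" .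
    have "norm h / s \<le> (1/2)^k" using k1 assms by (simp add: field_simps)
    moreover have "0 \<le> norm h / s" using nh by (intro divide_nonneg_nonneg) linarith+
    ultimately have "(norm h / s) powr \<alpha> \<le> ((1/2)^k) powr \<alpha>"
      by (intro powr_mono2) (use assms in auto)
    hence i2: "(norm h / s) powr \<alpha> \<le> ?q^k" by (simp add: half_pow_powr)
    have "mA \<alpha> s h = inverse (norm h ^ DIM('a)) * (norm h / s) powr \<alpha>"
      using True by (simp add: mA_def)
    also have "\<dots> \<le> ?c k" by (rule mult_mono[OF i1 i2]) (use assms in auto)
    finally have "mA \<alpha> s h \<le> ?c k" .
    thus ?thesis using k1 by blast
  qed
qed

lemma mB_int:
  assumes "0 < \<alpha>" "0 < s"
  shows "(\<integral>\<^sup>+ h. ennreal (mB \<alpha> s (h::'a::euclidean_space)) \<partial>lborel)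
         \<le> ennreal (unit_ball_vol DIM('a) * 2 ^ DIM('a) / (1 - (1/2) powr \<alpha>))"
proof (rule cball_series_bound)
  let ?q = "(1/2::real) powr \<alpha>"
  show "0 \<le> ?q" by simp
  show "?q < 1" using assms powr_less_mono2[of \<alpha> "1/2" 1] by simp
  let ?c = "\<lambda>k::nat. (1/(s*2^k))^DIM('a) * ?q^k"
  let ?R = "\<lambda>k::nat. s * 2^(k+1)"
  show "\<And>k. 0 \<le> ?c k" using assms by simp
  show "\<And>k. 0 \<le> ?R k" using assms by simp
  show "?c k * ?R k ^ DIM('a) \<le> 2 ^ DIM('a) * ?q ^ k" for k
  proof -
    have "?c k * ?R k ^ DIM('a) = ((1/(s*2^k))^DIM('a) * (s*2^(k+1))^DIM('a)) * ?q^k"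
      by (simp add: mult_ac)
    also have "\<dots> = ((1/(s*2^k)) * (s*2^(k+1)))^DIM('a) * ?q^k"
      by (simp only: power_mult_distrib)
    also have "(1/(s*2^k)) * (s*2^(k+1)) = (2::real)" using assms by (simp add: field_simps)
    finally show ?thesis by simp
  qed
  show "mB \<alpha> s h \<le> 0 \<or> (\<exists>k. mB \<alpha> s h \<le> ?c k \<and> norm h \<le> ?R k)" for h :: 'a
  proof (cases "s < norm h")
    case False thus ?thesis by (simp add: mB_def)
  next
    case True
    hence nh: "0 < norm h" "s < norm h" using assms by auto
    obtain k :: nat where k: "2^k \<le> norm h / s" "norm h / s < 2^(k+1)"
      using pow2_bracket[of "norm h / s"] nh assms by auto
    have k1: "s * 2^k \<le> norm h" using k(1) assms by (simp add: field_simps)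
    have k2: "norm h \<le> s * 2^(k+1)" using k(2) assms by (simp add: field_simps)
    have "inverse (norm h ^ DIM('a)) = (inverse (norm h))^DIM('a)" by (simp add: power_inverse)
    also have "\<dots> \<le> (1/(s*2^k))^DIM('a)"
    proof (rule power_mono)
      show "inverse (norm h) \<le> 1/(s*2^k)" using k1 nh assms
        by (simp add: field_simps)
    qed (use nh in simp)
    finally have i1: "inverse (norm h ^ DIM('a)) \<le> (1/(s*2^k))^DIM('a)" .
    have "s / norm h \<le> (1/2)^k" using k1 nh assms by (simp add: field_simps)
    hence "(s / norm h) powr \<alpha> \<le> ((1/2)^k) powr \<alpha>"
      by (intro powr_mono2) (use assms nh in \<open>auto intro: divide_nonneg_nonneg less_imp_le\<close>)
    hence i2: "(s / norm h) powr \<alpha> \<le> ?q^k" by (simp add: half_pow_powr)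
    have "mB \<alpha> s h = inverse (norm h ^ DIM('a)) * (s / norm h) powr \<alpha>"
      using True by (simp add: mB_def)
    also have "\<dots> \<le> ?c k" by (rule mult_mono[OF i1 i2]) (use assms in auto)
    finally have "mB \<alpha> s h \<le> ?c k" .
    thus ?thesis using k2 by blast
  qed
qed

lemma mA_meas[measurable]: "(mA \<alpha> s :: 'a::euclidean_space \<Rightarrow> real) \<in> borel_measurable lborel"
  unfolding mA_def by measurable

lemma mB_meas[measurable]: "(mB \<alpha> s :: 'a::euclidean_space \<Rightarrow> real) \<in> borel_measurable lborel"
  unfolding mB_def by measurable


definition Kf :: "(real \<Rightarrow> real) \<Rightarrow> 'a::euclidean_space \<Rightarrow> real" where
  "Kf \<phi> h = inverse (norm h ^ DIM('a) * \<phi> (norm h))"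

locale setting =
  fixes \<psi> \<phi> :: "real \<Rightarrow> real"
    and \<delta>1 a1 \<alpha> c\<psi> \<beta> C\<beta> \<gamma> C\<gamma> :: real
  assumes psi_pos: "\<And>r. 0 < r \<Longrightarrow> r \<le> 1 \<Longrightarrow> 0 < \<psi> r"
    and psi_lim: "(\<psi> \<longlongrightarrow> 0) (at_right 0)"
    and phi_pos: "\<And>r. 0 < r \<Longrightarrow> 0 < \<phi> r"
    and phi1: "\<phi> 1 = 1" and psi1: "\<psi> 1 = 1"
    and d1: "0 < \<delta>1" and a1: "0 < a1"
    and scal: "\<And>lam r. 1 \<le> lam \<Longrightarrow> 0 < r \<Longrightarrow> a1 * lam powr (2 * \<delta>1) * \<phi> r \<le> \<phi> (lam * r)"
    and alpha: "0 < \<alpha>" and cpsi: "0 < c\<psi>"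
    and psi_ai: "\<And>t s. 0 < t \<Longrightarrow> t \<le> s \<Longrightarrow> s \<le> 1 \<Longrightarrow> c\<psi> * (\<psi> t / t powr \<alpha>) \<le> \<psi> s / s powr \<alpha>"
    and beta: "\<beta> < 1" and Cbeta: "0 < C\<beta>"
    and psi_ad: "\<And>t s. 0 < t \<Longrightarrow> t \<le> s \<Longrightarrow> s \<le> 1 \<Longrightarrow> \<psi> s / s powr \<beta> \<le> C\<beta> * (\<psi> t / t powr \<beta>)"
    and gamma: "\<gamma> < 1" and Cgamma: "0 < C\<gamma>"
    and phi_ad: "\<And>t s. 0 < t \<Longrightarrow> t \<le> s \<Longrightarrow> s \<le> 1 \<Longrightarrow> \<phi> s / s powr \<gamma> \<le> C\<gamma> * (\<phi> t / t powr \<gamma>)"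
begin

lemma psi_small:
  assumes "0 < t" "t \<le> s" "s \<le> 1"
  shows "\<psi> t \<le> \<psi> s * (t / s) powr \<alpha> / c\<psi>"
proof -
  have s: "0 < s" using assms by simp
  have "c\<psi> * (\<psi> t / t powr \<alpha>) \<le> \<psi> s / s powr \<alpha>" using psi_ai assms by blast
  hence "c\<psi> * \<psi> t * s powr \<alpha> \<le> \<psi> s * t powr \<alpha>" using assms s by (simp add: field_simps)
  thus ?thesis using assms s cpsi by (simp add: powr_divide field_simps)
qed

lemma psi_lower:
  assumes "0 < t" "t \<le> s" "s \<le> 1"
  shows "c\<psi> * \<psi> t \<le> \<psi> s"
proof -
  have s: "0 < s" using assms by simp
  have "c\<psi> * (\<psi> t / t powr \<alpha>) \<le> \<psi> s / s powr \<alpha>" using psi_ai assms by blast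
  hence "c\<psi> * \<psi> t * s powr \<alpha> \<le> \<psi> s * t powr \<alpha>" using assms s by (simp add: field_simps)
  moreover have "t powr \<alpha> \<le> s powr \<alpha>" using assms alpha by (intro powr_mono2) auto
  moreover have "0 \<le> \<psi> s" using psi_pos[of s] assms by simp
  ultimately have "c\<psi> * \<psi> t * s powr \<alpha> \<le> \<psi> s * s powr \<alpha>"
    by (meson mult_left_mono order_trans)
  thus ?thesis using s by simp
qed

lemma kern_small_psi:
  fixes h :: "'a::euclidean_space"
  assumes "0 < norm h" "norm h \<le> s" "s \<le> 1"
  shows "\<psi> (norm h) * inverse (norm h ^ DIM('a)) \<le> \<psi> s / c\<psi> * mA \<alpha> s h"
proof -
  have "\<psi> (norm h) \<le> \<psi> s * (norm h / s) powr \<alpha> / c\<psi>" using psi_small assms by blast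
  hence "\<psi> (norm h) * inverse (norm h ^ DIM('a)) \<le> \<psi> s * (norm h / s) powr \<alpha> / c\<psi> * inverse (norm h ^ DIM('a))"
    by (rule mult_right_mono) simp
  also have "\<dots> = \<psi> s / c\<psi> * mA \<alpha> s h" using assms by (simp add: mA_def field_simps)
  finally show ?thesis .
qed

lemma kern_large:
  fixes h :: "'a::euclidean_space"
  assumes s: "0 < s" and hs: "s < norm h"
  shows "Kf \<phi> h \<le> mB (2 * \<delta>1) s h / (a1 * \<phi> s)"
proof -
  have nh: "0 < norm h" using s hs by linarith
  define lam where "lam = norm h / s"
  have lam: "1 \<le> lam" using s hs by (simp add: lam_def)
  have "a1 * lam powr (2 * \<delta>1) * \<phi> s \<le> \<phi> (lam * s)" using scal lam s by blast
  also have "lam * s = norm h" using s by (simp add: lam_def)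
  finally have ph: "a1 * lam powr (2 * \<delta>1) * \<phi> s \<le> \<phi> (norm h)" .
  have pos: "0 < a1 * lam powr (2 * \<delta>1) * \<phi> s" using a1 lam phi_pos[OF s] by simp
  have "inverse (\<phi> (norm h)) \<le> inverse (a1 * lam powr (2 * \<delta>1) * \<phi> s)"
    using ph pos by (rule le_imp_inverse_le)
  also have "\<dots> = (s / norm h) powr (2 * \<delta>1) / (a1 * \<phi> s)"
    using s nh by (simp add: lam_def powr_divide field_simps)
  finally have i: "inverse (\<phi> (norm h)) \<le> (s / norm h) powr (2 * \<delta>1) / (a1 * \<phi> s)" .
  have "Kf \<phi> h = inverse (norm h ^ DIM('a)) * inverse (\<phi> (norm h))"
    by (simp add: Kf_def)
  also have "\<dots> \<le> inverse (norm h ^ DIM('a)) * ((s / norm h) powr (2 * \<delta>1) / (a1 * \<phi> s))"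
    using i by (rule mult_left_mono) simp
  also have "\<dots> = mB (2 * \<delta>1) s h / (a1 * \<phi> s)" using hs by (simp add: mB_def)
  finally show ?thesis .
qed

lemma phi_small_inv:
  assumes "0 < t" "t \<le> s" "s \<le> 1"
  shows "inverse (\<phi> t) \<le> C\<gamma> * (s / t) powr \<gamma> / \<phi> s"
proof -
  have s: "0 < s" using assms by simp
  have pt: "0 < \<phi> t" "0 < \<phi> s" using phi_pos assms s by auto
  have "\<phi> s / s powr \<gamma> \<le> C\<gamma> * (\<phi> t / t powr \<gamma>)" using phi_ad assms by blast
  hence "\<phi> s * t powr \<gamma> \<le> C\<gamma> * \<phi> t * s powr \<gamma>" using assms s by (simp add: field_simps)
  thus ?thesis using assms s pt Cgamma by (simp add: powr_divide field_simps)
qed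

lemma kern_small_lin:
  fixes h :: "'a::euclidean_space"
  assumes "0 < norm h" "norm h \<le> s" "s \<le> 1"
  shows "norm h * Kf \<phi> h \<le> C\<gamma> * s / \<phi> s * mA (1 - \<gamma>) s h"
proof -
  have s: "0 < s" using assms by linarith
  have ps: "0 < \<phi> s" using phi_pos s by simp
  have "norm h * Kf \<phi> h = norm h * inverse (norm h ^ DIM('a)) * inverse (\<phi> (norm h))"
    by (simp add: Kf_def)
  also have "\<dots> \<le> norm h * inverse (norm h ^ DIM('a)) * (C\<gamma> * (s / norm h) powr \<gamma> / \<phi> s)"
    by (rule mult_left_mono[OF phi_small_inv]) (use assms in auto)
  also have "norm h * (s / norm h) powr \<gamma> = s * (norm h / s) powr (1 - \<gamma>)"
    using assms s by (simp add: powr_divide powr_diff field_simps powr_one)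
  hence "norm h * inverse (norm h ^ DIM('a)) * (C\<gamma> * (s / norm h) powr \<gamma> / \<phi> s)
      = C\<gamma> * s / \<phi> s * (inverse (norm h ^ DIM('a)) * (norm h / s) powr (1 - \<gamma>))"
    by (simp add: field_simps)
  also have "\<dots> = C\<gamma> * s / \<phi> s * mA (1 - \<gamma>) s h" using assms by (simp add: mA_def)
  finally show ?thesis .
qed

lemma kern_mid_psi:
  fixes h :: "'a::euclidean_space"
  assumes s: "0 < s" and hs: "s < norm h" "norm h \<le> 1"
  shows "\<psi> (norm h) / norm h * inverse (norm h ^ DIM('a)) \<le> C\<beta> * \<psi> s / s * mB (1 - \<beta>) s h"
proof -
  have nh: "0 < norm h" using s hs by linarith
  have "\<psi> (norm h) / norm h powr \<beta> \<le> C\<beta> * (\<psi> s / s powr \<beta>)" using psi_ad s hs by auto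
  hence "\<psi> (norm h) * s powr \<beta> \<le> C\<beta> * \<psi> s * norm h powr \<beta>" using s nh by (simp add: field_simps)
  hence i: "\<psi> (norm h) / norm h \<le> C\<beta> * \<psi> s / s * (s / norm h) powr (1 - \<beta>)"
    using s nh by (simp add: powr_divide powr_diff field_simps powr_one)
  have "\<psi> (norm h) / norm h * inverse (norm h ^ DIM('a)) \<le> C\<beta> * \<psi> s / s * (s / norm h) powr (1 - \<beta>) * inverse (norm h ^ DIM('a))"
    using i by (rule mult_right_mono) simp
  also have "\<dots> = C\<beta> * \<psi> s / s * mB (1 - \<beta>) s h" using hs by (simp add: mB_def)
  finally show ?thesis .
qed

lemma lin_le_psi:
  assumes "0 < s" "s \<le> 1"
  shows "s \<le> C\<beta> * \<psi> s * s powr (1 - \<beta>)"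
proof -
  have "\<psi> 1 / 1 powr \<beta> \<le> C\<beta> * (\<psi> s / s powr \<beta>)" using psi_ad assms by blast
  hence "\<psi> 1 * s powr \<beta> \<le> C\<beta> * \<psi> s" using assms by (simp add: field_simps)
  moreover have "s = s powr \<beta> * s powr (1 - \<beta>)" using assms by (simp add: powr_add[symmetric])
  ultimately show ?thesis using psi1 mult_right_mono[of "s powr \<beta>" "C\<beta> * \<psi> s" "s powr (1 - \<beta>)"]
    by simp
qed

end


definition MC :: "nat \<Rightarrow> real \<Rightarrow> real" where
  "MC n x = unit_ball_vol (real n) * 2 ^ n / (1 - (1/2) powr x)"

lemma MC_nonneg: "0 < x \<Longrightarrow> 0 \<le> MC n x"
  unfolding MC_def using powr_less_mono2[of x "1/2" 1]
  by (intro divide_nonneg_nonneg mult_nonneg_nonneg) auto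

lemma mA_int': "0 < x \<Longrightarrow> 0 < s \<Longrightarrow> (\<integral>\<^sup>+ h. ennreal (mA x s (h::'a::euclidean_space)) \<partial>lborel) \<le> ennreal (MC DIM('a) x)"
  using mA_int[of x s] by (simp add: MC_def)
lemma mB_int': "0 < x \<Longrightarrow> 0 < s \<Longrightarrow> (\<integral>\<^sup>+ h. ennreal (mB x s (h::'a::euclidean_space)) \<partial>lborel) \<le> ennreal (MC DIM('a) x)"
  using mB_int[of x s] by (simp add: MC_def)

lemma int_bound3:
  fixes F :: "'a::euclidean_space \<Rightarrow> real"
  assumes c: "0 \<le> c1" "0 \<le> c2" "0 \<le> c3" and x: "0 < x1" "0 < x2" "0 < x3" and s: "0 < s1" "0 < s2" "0 < s3"
    and pt: "\<And>h. F h \<le> c1 * mA x1 s1 h + c2 * mB x2 s2 h + c3 * mB x3 s3 h"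
  shows "(\<integral>\<^sup>+ h. ennreal (F h) \<partial>lborel) \<le> ennreal (c1 * MC DIM('a) x1 + c2 * MC DIM('a) x2 + c3 * MC DIM('a) x3)"
proof -
  have "(\<integral>\<^sup>+ h. ennreal (F h) \<partial>lborel) \<le> (\<integral>\<^sup>+ h. ennreal (c1 * mA x1 s1 (h::'a)) + ennreal (c2 * mB x2 s2 (h::'a)) + ennreal (c3 * mB x3 s3 (h::'a)) \<partial>lborel)"
    by (intro nn_integral_mono)
       (metis (no_types, lifting) c ennreal_leI ennreal_plus mA_nonneg mB_nonneg mult_nonneg_nonneg pt add_nonneg_nonneg)
  also have "\<dots> = (\<integral>\<^sup>+ h. ennreal c1 * ennreal (mA x1 s1 (h::'a)) \<partial>lborel) + (\<integral>\<^sup>+ h. ennreal c2 * ennreal (mB x2 s2 (h::'a)) \<partial>lborel)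
       + (\<integral>\<^sup>+ h. ennreal c3 * ennreal (mB x3 s3 (h::'a)) \<partial>lborel)"
    using c by (simp add: nn_integral_add ennreal_mult mA_nonneg mB_nonneg)
  also have "\<dots> = ennreal c1 * (\<integral>\<^sup>+ h. ennreal (mA x1 s1 (h::'a)) \<partial>lborel) + ennreal c2 * (\<integral>\<^sup>+ h. ennreal (mB x2 s2 (h::'a)) \<partial>lborel)
       + ennreal c3 * (\<integral>\<^sup>+ h. ennreal (mB x3 s3 (h::'a)) \<partial>lborel)"
    by (simp add: nn_integral_cmult)
  also have "\<dots> \<le> ennreal c1 * ennreal (MC DIM('a) x1) + ennreal c2 * ennreal (MC DIM('a) x2) + ennreal c3 * ennreal (MC DIM('a) x3)"
    by (intro add_mono mult_left_mono mA_int' mB_int' x s) auto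
  also have "\<dots> = ennreal (c1 * MC DIM('a) x1 + c2 * MC DIM('a) x2 + c3 * MC DIM('a) x3)"
    using c x by (simp add: ennreal_mult ennreal_plus MC_nonneg)
  finally show ?thesis .
qed

lemma mvt_line:
  fixes g :: "real \<Rightarrow> real"
  assumes "\<And>t. (g has_real_derivative g' t) (at t)" "\<And>t. \<bar>g' t\<bar> \<le> L"
  shows "\<bar>g b - g a\<bar> \<le> L * \<bar>b - a\<bar>"
  using field_differentiable_bound[of UNIV g g' L b a] assms by auto

lemma line_lip:
  fixes u :: "'a::euclidean_space \<Rightarrow> real"
  assumes D: "\<And>i y t. i \<in> Basis \<Longrightarrow> ((\<lambda>t. u (y + t *\<^sub>R i)) has_real_derivative pu i (y + t *\<^sub>R i)) (at t)"
    and B: "\<And>i w. i \<in> Basis \<Longrightarrow> \<bar>pu i w\<bar> \<le> L"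
  shows "\<bar>u (x + h) - u x\<bar> \<le> real DIM('a) * L * norm h"
proof -
  have main: "S \<subseteq> Basis \<Longrightarrow> \<bar>u (x + (\<Sum>i\<in>S. (h \<bullet> i) *\<^sub>R i)) - u x\<bar> \<le> L * (\<Sum>i\<in>S. \<bar>h \<bullet> i\<bar>)" for S
  proof (induction S rule: infinite_finite_induct)
    case (infinite S)
    have "finite S" using infinite.prems finite_Basis finite_subset by blast
    with infinite show ?case by simp
  next
    case empty show ?case by simp
  next
    case (insert i S)
    have iB: "i \<in> Basis" using insert by auto
    let ?p = "\<Sum>i\<in>S. (h \<bullet> i) *\<^sub>R i"
    have "\<bar>u (x + ?p + (h \<bullet> i) *\<^sub>R i) - u (x + ?p + 0 *\<^sub>R i)\<bar> \<le> L * \<bar>(h \<bullet> i) - 0\<bar>"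
      by (rule mvt_line[where g' = "\<lambda>t. pu i (x + ?p + t *\<^sub>R i)"]) (use D B iB in auto)
    hence 1: "\<bar>u (x + ?p + (h \<bullet> i) *\<^sub>R i) - u (x + ?p)\<bar> \<le> L * \<bar>h \<bullet> i\<bar>" by simp
    have 2: "\<bar>u (x + ?p) - u x\<bar> \<le> L * (\<Sum>i\<in>S. \<bar>h \<bullet> i\<bar>)" using insert by auto
    have "x + (\<Sum>i\<in>insert i S. (h \<bullet> i) *\<^sub>R i) = x + ?p + (h \<bullet> i) *\<^sub>R i"
      using insert by (simp add: add_ac)
    moreover have "L * (\<Sum>i\<in>insert i S. \<bar>h \<bullet> i\<bar>) = L * \<bar>h \<bullet> i\<bar> + L * (\<Sum>i\<in>S. \<bar>h \<bullet> i\<bar>)"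
      using insert by (simp add: algebra_simps)
    ultimately show ?case using 1 2 by (smt (verit))
  qed
  have L: "0 \<le> L" using B[of "SOME i. i \<in> Basis" 0] by (metis abs_ge_zero order_trans someI_ex nonempty_Basis ex_in_conv)
  have "\<bar>u (x + h) - u x\<bar> \<le> L * (\<Sum>i\<in>Basis. \<bar>h \<bullet> i\<bar>)"
    using main[of Basis] by (simp add: euclidean_representation)
  also have "\<dots> \<le> L * (\<Sum>i\<in>(Basis::'a set). norm h)"
    by (intro mult_left_mono sum_mono Basis_le_norm L)
  also have "\<dots> = real DIM('a) * L * norm h" by simp
  finally show ?thesis .
qed


context setting begin

lemma Kf_zero: "Kf \<phi> (0::'a::euclidean_space) = 0" by (simp add: Kf_def)

lemma Kf_nonneg: "0 \<le> Kf \<phi> (h::'a::euclidean_space)"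
proof (cases "h = 0")
  case True thus ?thesis by (simp add: Kf_zero)
next
  case False thus ?thesis using phi_pos[of "norm h"] by (simp add: Kf_def)
qed

lemma Kf_phipsi:
  assumes "(h::'a::euclidean_space) \<noteq> 0"
  shows "\<phi> (norm h) * \<psi> (norm h) * Kf \<phi> h = \<psi> (norm h) * inverse (norm h ^ DIM('a))"
  using phi_pos[of "norm h"] assms by (simp add: Kf_def field_simps)

lemma ord0_J:
  fixes v :: "'a::euclidean_space \<Rightarrow> real"
  assumes V: "\<And>y. \<bar>v y\<bar> \<le> V0"
    and H: "\<And>x h. 0 < norm h \<Longrightarrow> norm h \<le> 1 \<Longrightarrow> \<bar>v (x + h) - v x\<bar> \<le> N * (\<phi> (norm h) * \<psi> (norm h))"
    and N: "0 \<le> N" and rho: "0 < \<rho>" "\<rho> \<le> 1"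
  shows "(\<integral>\<^sup>+ h. ennreal (\<bar>v (x + h) - v x\<bar> * Kf \<phi> h) \<partial>lborel)
     \<le> ennreal (N * \<psi> \<rho> / c\<psi> * MC DIM('a) \<alpha> + 2 * V0 / (a1 * \<phi> \<rho>) * MC DIM('a) (2 * \<delta>1) + 0 * MC DIM('a) 1)"
proof (rule int_bound3)
  have V0: "0 \<le> V0" using V[of 0] by linarith
  have pr: "0 < \<phi> \<rho>" "0 < \<psi> \<rho>" using phi_pos psi_pos rho by auto
  show "0 \<le> N * \<psi> \<rho> / c\<psi>" using N pr cpsi by simp
  show "0 \<le> 2 * V0 / (a1 * \<phi> \<rho>)" using V0 pr a1 by simp
  show "0 \<le> (0::real)" "0 < \<alpha>" "0 < 2 * \<delta>1" "0 < (1::real)" "0 < \<rho>" "0 < \<rho>" "0 < (1::real)"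
    using alpha d1 rho by auto
  fix h :: 'a
  show "\<bar>v (x + h) - v x\<bar> * Kf \<phi> h \<le> N * \<psi> \<rho> / c\<psi> * mA \<alpha> \<rho> h + 2 * V0 / (a1 * \<phi> \<rho>) * mB (2 * \<delta>1) \<rho> h + 0 * mB 1 1 h"
  proof -
    have t1: "0 \<le> N * \<psi> \<rho> / c\<psi> * mA \<alpha> \<rho> h" by (intro mult_nonneg_nonneg divide_nonneg_nonneg) (auto simp: mA_nonneg N less_imp_le pr cpsi)
    have t2: "0 \<le> 2 * V0 / (a1 * \<phi> \<rho>) * mB (2 * \<delta>1) \<rho> h" by (intro mult_nonneg_nonneg divide_nonneg_nonneg) (auto simp: mB_nonneg V0 less_imp_le pr a1)
    consider "h = 0" | "0 < norm h" "norm h \<le> \<rho>" | "\<rho> < norm h" by force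
    then show ?thesis
    proof cases
      case 1 thus ?thesis using t1 t2 by (simp add: Kf_zero)
    next
      case 2
      have "\<bar>v (x + h) - v x\<bar> * Kf \<phi> h \<le> N * (\<phi> (norm h) * \<psi> (norm h)) * Kf \<phi> h"
        using H[of h x] 2 rho Kf_nonneg[of h] by (intro mult_right_mono) auto
      also have "\<dots> = N * (\<psi> (norm h) * inverse (norm h ^ DIM('a)))"
        using Kf_phipsi[of h] 2 by (simp add: mult.assoc)
      also have "\<dots> \<le> N * (\<psi> \<rho> / c\<psi> * mA \<alpha> \<rho> h)"
        using kern_small_psi[of h \<rho>] 2 rho N by (intro mult_left_mono) auto
      finally show ?thesis using t2 by simp
    next
      case 3
      have "\<bar>v (x + h) - v x\<bar> \<le> 2 * V0" using V[of "x+h"] V[of x] by linarith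
      hence "\<bar>v (x + h) - v x\<bar> * Kf \<phi> h \<le> 2 * V0 * (mB (2 * \<delta>1) \<rho> h / (a1 * \<phi> \<rho>))"
        using kern_large[of \<rho> h] 3 rho Kf_nonneg[of h] V0
        by (intro mult_mono) auto
      thus ?thesis using t1 by simp
    qed
  qed
qed

lemma ord0_Q:
  fixes v :: "'a::euclidean_space \<Rightarrow> real"
  assumes H: "\<And>x h. 0 < norm h \<Longrightarrow> norm h \<le> 1 \<Longrightarrow> \<bar>v (x + h) - v x\<bar> \<le> N * (\<phi> (norm h) * \<psi> (norm h))"
    and N: "0 \<le> N" and z: "0 < norm z" "norm z \<le> 1"
  shows "(\<integral>\<^sup>+ h. ennreal (\<bar>v (x + z + h) - v (x + z) - (v (x + h) - v x)\<bar> * Kf \<phi> h) \<partial>lborel)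
     \<le> ennreal ((2 * N / c\<psi> * MC DIM('a) \<alpha> + 2 * N / a1 * MC DIM('a) (2 * \<delta>1)) * \<psi> (norm z))"
proof -
  let ?s = "norm z"
  have pr: "0 < \<phi> ?s" "0 < \<psi> ?s" using phi_pos psi_pos z by auto
  have "(\<integral>\<^sup>+ h. ennreal (\<bar>v (x + z + h) - v (x + z) - (v (x + h) - v x)\<bar> * Kf \<phi> h) \<partial>lborel)
     \<le> ennreal (2 * N * \<psi> ?s / c\<psi> * MC DIM('a) \<alpha> + 2 * N * \<psi> ?s / a1 * MC DIM('a) (2 * \<delta>1) + 0 * MC DIM('a) 1)"
  proof (rule int_bound3)
    show "0 \<le> 2 * N * \<psi> ?s / c\<psi>" using N pr cpsi by simp
    show "0 \<le> 2 * N * \<psi> ?s / a1" using N pr a1 by simp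
    show "0 \<le> (0::real)" "0 < \<alpha>" "0 < 2 * \<delta>1" "0 < (1::real)" "0 < ?s" "0 < ?s" "0 < (1::real)"
      using alpha d1 z by auto
    fix h :: 'a
    show "\<bar>v (x + z + h) - v (x + z) - (v (x + h) - v x)\<bar> * Kf \<phi> h \<le> 2 * N * \<psi> ?s / c\<psi> * mA \<alpha> ?s h + 2 * N * \<psi> ?s / a1 * mB (2 * \<delta>1) ?s h + 0 * mB 1 1 h"
    proof -
      have t1: "0 \<le> 2 * N * \<psi> ?s / c\<psi> * mA \<alpha> ?s h" by (intro mult_nonneg_nonneg divide_nonneg_nonneg) (auto simp: mA_nonneg N less_imp_le pr cpsi)
      have t2: "0 \<le> 2 * N * \<psi> ?s / a1 * mB (2 * \<delta>1) ?s h" by (intro mult_nonneg_nonneg divide_nonneg_nonneg) (auto simp: mB_nonneg N less_imp_le pr a1)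
      consider "h = 0" | "0 < norm h" "norm h \<le> ?s" | "?s < norm h" by force
      then show ?thesis
      proof cases
        case 1 thus ?thesis using t1 t2 by (simp add: Kf_zero)
      next
        case 2
        have "\<bar>v (x + z + h) - v (x + z) - (v (x + h) - v x)\<bar> \<le> 2 * (N * (\<phi> (norm h) * \<psi> (norm h)))"
          using H[of h "x + z"] H[of h x] 2 z by (smt (verit))
        hence "\<bar>v (x + z + h) - v (x + z) - (v (x + h) - v x)\<bar> * Kf \<phi> h \<le> 2 * (N * (\<phi> (norm h) * \<psi> (norm h))) * Kf \<phi> h"
          using Kf_nonneg[of h] by (intro mult_right_mono) auto
        also have "\<dots> = 2 * N * (\<psi> (norm h) * inverse (norm h ^ DIM('a)))"
          using Kf_phipsi[of h] 2 by (simp add: mult.assoc)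
        also have "\<dots> \<le> 2 * N * (\<psi> ?s / c\<psi> * mA \<alpha> ?s h)"
          using kern_small_psi[of h ?s] 2 z N by (intro mult_left_mono) auto
        finally show ?thesis using t2 by simp
      next
        case 3
        have "\<bar>v (x + h + z) - v (x + h)\<bar> \<le> N * (\<phi> ?s * \<psi> ?s)" "\<bar>v (x + z) - v x\<bar> \<le> N * (\<phi> ?s * \<psi> ?s)"
          using H z by auto
        moreover have e: "v (x + z + h) = v (x + h + z)" by (simp add: add_ac)
        ultimately have "\<bar>v (x + z + h) - v (x + z) - (v (x + h) - v x)\<bar> \<le> 2 * N * (\<phi> ?s * \<psi> ?s)"
          unfolding abs_le_iff e by linarith
        hence "\<bar>v (x + z + h) - v (x + z) - (v (x + h) - v x)\<bar> * Kf \<phi> h \<le> 2 * N * (\<phi> ?s * \<psi> ?s) * (mB (2 * \<delta>1) ?s h / (a1 * \<phi> ?s))"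
          using kern_large[of ?s h] 3 z Kf_nonneg[of h] N pr
          by (intro mult_mono) auto
        also have "\<dots> = 2 * N * \<psi> ?s / a1 * mB (2 * \<delta>1) ?s h" using pr a1 by (simp add: field_simps)
        finally show ?thesis using t1 by simp
      qed
    qed
  qed
  also have "2 * N * \<psi> ?s / c\<psi> * MC DIM('a) \<alpha> + 2 * N * \<psi> ?s / a1 * MC DIM('a) (2 * \<delta>1) + 0 * MC DIM('a) 1
      = (2 * N / c\<psi> * MC DIM('a) \<alpha> + 2 * N / a1 * MC DIM('a) (2 * \<delta>1)) * \<psi> ?s"
    by (simp add: field_simps)
  finally show ?thesis .
qed

end


context setting begin

lemma ord1_first:
  fixes v :: "'a::euclidean_space \<Rightarrow> real"
  assumes Dv: "\<And>i y t. i \<in> Basis \<Longrightarrow> ((\<lambda>t. v (y + t *\<^sub>R i)) has_real_derivative pd i (y + t *\<^sub>R i)) (at t)"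
    and Db: "\<And>i y. i \<in> Basis \<Longrightarrow> \<bar>pd i y\<bar> \<le> N"
  shows "\<bar>v (x + h) - v x\<bar> \<le> real DIM('a) * N * norm h"
  by (rule line_lip[OF Dv Db])

lemma ord1_second:
  fixes v :: "'a::euclidean_space \<Rightarrow> real"
  assumes Dv: "\<And>i y t. i \<in> Basis \<Longrightarrow> ((\<lambda>t. v (y + t *\<^sub>R i)) has_real_derivative pd i (y + t *\<^sub>R i)) (at t)"
    and Dh: "\<And>i y z. i \<in> Basis \<Longrightarrow> 0 < norm z \<Longrightarrow> norm z \<le> 1 \<Longrightarrow> \<bar>pd i (y + z) - pd i y\<bar> \<le> N * (\<phi> (norm z) * \<psi> (norm z)) / norm z"
    and z: "0 < norm z" "norm z \<le> 1"
  shows "\<bar>v (x + z + h) - v (x + z) - (v (x + h) - v x)\<bar> \<le> real DIM('a) * (N * (\<phi> (norm z) * \<psi> (norm z)) / norm z) * norm h"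
proof -
  let ?u = "\<lambda>w. v (w + z) - v w"
  let ?pu = "\<lambda>i w. pd i (w + z) - pd i w"
  have "\<bar>?u (x + h) - ?u x\<bar> \<le> real DIM('a) * (N * (\<phi> (norm z) * \<psi> (norm z)) / norm z) * norm h"
  proof (rule line_lip)
    fix i y t assume i: "(i::'a) \<in> Basis"
    have 1: "((\<lambda>t. v ((y + z) + t *\<^sub>R i)) has_real_derivative pd i ((y + z) + t *\<^sub>R i)) (at t)"
      using Dv i by blast
    have 2: "((\<lambda>t. v (y + t *\<^sub>R i)) has_real_derivative pd i (y + t *\<^sub>R i)) (at t)"
      using Dv i by blast
    have "((\<lambda>t. v ((y + z) + t *\<^sub>R i) - v (y + t *\<^sub>R i)) has_real_derivative pd i ((y + z) + t *\<^sub>R i) - pd i (y + t *\<^sub>R i)) (at t)"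
      by (rule DERIV_diff[OF 1 2])
    thus "((\<lambda>t. ?u (y + t *\<^sub>R i)) has_real_derivative ?pu i (y + t *\<^sub>R i)) (at t)"
      by (simp add: add_ac)
  next
    fix i w assume i: "(i::'a) \<in> Basis"
    show "\<bar>?pu i w\<bar> \<le> N * (\<phi> (norm z) * \<psi> (norm z)) / norm z" using Dh[where i=i and y=w and z=z] i z by simp
  qed
  moreover have "?u (x + h) - ?u x = v (x + z + h) - v (x + z) - (v (x + h) - v x)"
    by (simp add: add_ac)
  ultimately show ?thesis by simp
qed

lemma ord1_J:
  fixes v :: "'a::euclidean_space \<Rightarrow> real"
  assumes V: "\<And>y. \<bar>v y\<bar> \<le> V0"
    and Dv: "\<And>i y t. i \<in> Basis \<Longrightarrow> ((\<lambda>t. v (y + t *\<^sub>R i)) has_real_derivative pd i (y + t *\<^sub>R i)) (at t)"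
    and Db: "\<And>i y. i \<in> Basis \<Longrightarrow> \<bar>pd i y\<bar> \<le> N"
    and N: "0 \<le> N" and rho: "0 < \<rho>" "\<rho> \<le> 1"
  shows "(\<integral>\<^sup>+ h. ennreal (\<bar>v (x + h) - v x\<bar> * Kf \<phi> h) \<partial>lborel)
     \<le> ennreal (real DIM('a) * N * C\<gamma> * \<rho> / \<phi> \<rho> * MC DIM('a) (1 - \<gamma>) + 2 * V0 / (a1 * \<phi> \<rho>) * MC DIM('a) (2 * \<delta>1) + 0 * MC DIM('a) 1)"
proof (rule int_bound3)
  have V0: "0 \<le> V0" using V[of 0] by linarith
  have pr: "0 < \<phi> \<rho>" using phi_pos rho by auto
  show "0 \<le> real DIM('a) * N * C\<gamma> * \<rho> / \<phi> \<rho>"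
    by (intro mult_nonneg_nonneg divide_nonneg_nonneg) (auto simp: N less_imp_le pr Cgamma rho)
  show "0 \<le> 2 * V0 / (a1 * \<phi> \<rho>)"
    by (intro mult_nonneg_nonneg divide_nonneg_nonneg) (auto simp: V0 less_imp_le pr a1)
  show "0 \<le> (0::real)" "0 < 1 - \<gamma>" "0 < 2 * \<delta>1" "0 < (1::real)" "0 < \<rho>" "0 < \<rho>" "0 < (1::real)"
    using gamma d1 rho by auto
  fix h :: 'a
  show "\<bar>v (x + h) - v x\<bar> * Kf \<phi> h \<le> real DIM('a) * N * C\<gamma> * \<rho> / \<phi> \<rho> * mA (1 - \<gamma>) \<rho> h + 2 * V0 / (a1 * \<phi> \<rho>) * mB (2 * \<delta>1) \<rho> h + 0 * mB 1 1 h"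
  proof -
    have t1: "0 \<le> real DIM('a) * N * C\<gamma> * \<rho> / \<phi> \<rho> * mA (1 - \<gamma>) \<rho> h"
      by (intro mult_nonneg_nonneg divide_nonneg_nonneg) (auto simp: mA_nonneg N less_imp_le pr Cgamma rho)
    have t2: "0 \<le> 2 * V0 / (a1 * \<phi> \<rho>) * mB (2 * \<delta>1) \<rho> h"
      by (intro mult_nonneg_nonneg divide_nonneg_nonneg) (auto simp: mB_nonneg V0 less_imp_le pr a1)
    consider "h = 0" | "0 < norm h" "norm h \<le> \<rho>" | "\<rho> < norm h" by force
    then show ?thesis
    proof cases
      case 1 thus ?thesis using t1 t2 by (simp add: Kf_zero)
    next
      case 2
      have "\<bar>v (x + h) - v x\<bar> * Kf \<phi> h \<le> real DIM('a) * N * norm h * Kf \<phi> h"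
        using ord1_first[OF Dv Db, of x h] Kf_nonneg[of h] by (intro mult_right_mono) auto
      also have "\<dots> = real DIM('a) * N * (norm h * Kf \<phi> h)" by simp
      also have "\<dots> \<le> real DIM('a) * N * (C\<gamma> * \<rho> / \<phi> \<rho> * mA (1 - \<gamma>) \<rho> h)"
        using kern_small_lin[of h \<rho>] 2 rho N by (intro mult_left_mono) auto
      finally show ?thesis using t2 by simp
    next
      case 3
      have "\<bar>v (x + h) - v x\<bar> \<le> 2 * V0" using V[of "x+h"] V[of x] by linarith
      hence "\<bar>v (x + h) - v x\<bar> * Kf \<phi> h \<le> 2 * V0 * (mB (2 * \<delta>1) \<rho> h / (a1 * \<phi> \<rho>))"
        using kern_large[of \<rho> h] 3 rho Kf_nonneg[of h] V0
        by (intro mult_mono) auto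
      thus ?thesis using t1 by simp
    qed
  qed
qed

lemma s_le_psi:
  assumes "0 < s" "s \<le> 1"
  shows "s \<le> C\<beta> * \<psi> s"
proof -
  have "s powr (1 - \<beta>) \<le> 1" using assms beta by (intro powr_le1) auto
  moreover have "0 \<le> C\<beta> * \<psi> s" using Cbeta psi_pos[of s] assms by simp
  ultimately show ?thesis using lin_le_psi[OF assms]
    by (meson mult_left_le order_trans)
qed

lemma ord1_Q:
  fixes v :: "'a::euclidean_space \<Rightarrow> real"
  assumes Dv: "\<And>i y t. i \<in> Basis \<Longrightarrow> ((\<lambda>t. v (y + t *\<^sub>R i)) has_real_derivative pd i (y + t *\<^sub>R i)) (at t)"
    and Db: "\<And>i y. i \<in> Basis \<Longrightarrow> \<bar>pd i y\<bar> \<le> N"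
    and Dh: "\<And>i y z. i \<in> Basis \<Longrightarrow> 0 < norm z \<Longrightarrow> norm z \<le> 1 \<Longrightarrow> \<bar>pd i (y + z) - pd i y\<bar> \<le> N * (\<phi> (norm z) * \<psi> (norm z)) / norm z"
    and N: "0 \<le> N" and z: "0 < norm z" "norm z \<le> 1"
  shows "(\<integral>\<^sup>+ h. ennreal (\<bar>v (x + z + h) - v (x + z) - (v (x + h) - v x)\<bar> * Kf \<phi> h) \<partial>lborel)
     \<le> ennreal ((real DIM('a) * N * C\<gamma> * MC DIM('a) (1 - \<gamma>) + real DIM('a) * N * C\<beta> * MC DIM('a) (1 - \<beta>)
          + 2 * real DIM('a) * N * C\<beta> / a1 * MC DIM('a) (2 * \<delta>1)) * \<psi> (norm z))"
proof -
  let ?s = "norm z"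
  let ?d = "real DIM('a)"
  have pr: "0 < \<phi> ?s" "0 < \<psi> ?s" using phi_pos psi_pos z by auto
  have "(\<integral>\<^sup>+ h. ennreal (\<bar>v (x + z + h) - v (x + z) - (v (x + h) - v x)\<bar> * Kf \<phi> h) \<partial>lborel)
     \<le> ennreal (?d * N * C\<gamma> * \<psi> ?s * MC DIM('a) (1 - \<gamma>) + ?d * N * C\<beta> * \<psi> ?s * MC DIM('a) (1 - \<beta>)
         + 2 * ?d * N * C\<beta> * \<psi> ?s / a1 * MC DIM('a) (2 * \<delta>1))"
  proof (rule int_bound3)
    show c1: "0 \<le> ?d * N * C\<gamma> * \<psi> ?s"
      by (intro mult_nonneg_nonneg divide_nonneg_nonneg) (auto simp: N less_imp_le pr Cgamma)
    show c2: "0 \<le> ?d * N * C\<beta> * \<psi> ?s"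
      by (intro mult_nonneg_nonneg divide_nonneg_nonneg) (auto simp: N less_imp_le pr Cbeta)
    show c3: "0 \<le> 2 * ?d * N * C\<beta> * \<psi> ?s / a1"
      by (intro mult_nonneg_nonneg divide_nonneg_nonneg) (auto simp: N less_imp_le pr Cbeta a1)
    show "0 < 1 - \<gamma>" "0 < 1 - \<beta>" "0 < 2 * \<delta>1" "0 < ?s" "0 < ?s" "0 < (1::real)"
      using gamma beta d1 z by auto
    fix h :: 'a
    let ?D = "\<bar>v (x + z + h) - v (x + z) - (v (x + h) - v x)\<bar>"
    have t1: "0 \<le> ?d * N * C\<gamma> * \<psi> ?s * mA (1 - \<gamma>) ?s h" by (rule mult_nonneg_nonneg[OF c1 mA_nonneg])
    have t2: "0 \<le> ?d * N * C\<beta> * \<psi> ?s * mB (1 - \<beta>) ?s h" by (rule mult_nonneg_nonneg[OF c2 mB_nonneg])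
    have t3: "0 \<le> 2 * ?d * N * C\<beta> * \<psi> ?s / a1 * mB (2 * \<delta>1) 1 h" by (rule mult_nonneg_nonneg[OF c3 mB_nonneg])
    consider "h = 0" | "0 < norm h" "norm h \<le> ?s" | "?s < norm h" "norm h \<le> 1" | "1 < norm h" by force
    then show "?D * Kf \<phi> h \<le> ?d * N * C\<gamma> * \<psi> ?s * mA (1 - \<gamma>) ?s h + ?d * N * C\<beta> * \<psi> ?s * mB (1 - \<beta>) ?s h
         + 2 * ?d * N * C\<beta> * \<psi> ?s / a1 * mB (2 * \<delta>1) 1 h"
    proof cases
      case 1 thus ?thesis using t1 t2 t3 by (simp add: Kf_zero)
    next
      case 2
      have "?D * Kf \<phi> h \<le> ?d * (N * (\<phi> ?s * \<psi> ?s) / ?s) * norm h * Kf \<phi> h"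
        using ord1_second[OF Dv Dh z, of x h] Kf_nonneg[of h] by (intro mult_right_mono) auto
      also have "\<dots> = ?d * (N * (\<phi> ?s * \<psi> ?s) / ?s) * (norm h * Kf \<phi> h)" by simp
      also have "\<dots> \<le> ?d * (N * (\<phi> ?s * \<psi> ?s) / ?s) * (C\<gamma> * ?s / \<phi> ?s * mA (1 - \<gamma>) ?s h)"
        using kern_small_lin[of h ?s] 2 z N pr by (intro mult_left_mono) auto
      also have "\<dots> = ?d * N * C\<gamma> * \<psi> ?s * mA (1 - \<gamma>) ?s h" using pr z by (simp add: field_simps)
      finally show ?thesis using t2 t3 by simp
    next
      case 3
      have hn: "0 < norm h" using 3 z by linarith
      have "\<bar>v (x + h + z) - v (x + h) - (v (x + z) - v x)\<bar> \<le> ?d * (N * (\<phi> (norm h) * \<psi> (norm h)) / norm h) * ?s"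
        using ord1_second[OF Dv Dh hn 3(2), of x z] by simp
      moreover have "v (x + h + z) = v (x + z + h)" by (simp add: add_ac)
      ultimately have D: "?D \<le> ?d * (N * (\<phi> (norm h) * \<psi> (norm h)) / norm h) * ?s"
        unfolding abs_le_iff by linarith
      have "?D * Kf \<phi> h \<le> ?d * (N * (\<phi> (norm h) * \<psi> (norm h)) / norm h) * ?s * Kf \<phi> h"
        using D Kf_nonneg[of h] by (intro mult_right_mono) auto
      also have "\<dots> = ?d * N * ?s * (\<psi> (norm h) / norm h * inverse (norm h ^ DIM('a)))"
        using Kf_phipsi[of h] hn by (simp add: field_simps)
      also have "\<dots> \<le> ?d * N * ?s * (C\<beta> * \<psi> ?s / ?s * mB (1 - \<beta>) ?s h)"
        using kern_mid_psi[of ?s h] 3 z N by (intro mult_left_mono) auto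
      also have "\<dots> = ?d * N * C\<beta> * \<psi> ?s * mB (1 - \<beta>) ?s h" using z by (simp add: field_simps)
      finally show ?thesis using t1 t3 by simp
    next
      case 4
      have "\<bar>v (x + h + z) - v (x + h)\<bar> \<le> ?d * N * ?s" "\<bar>v (x + z) - v x\<bar> \<le> ?d * N * ?s"
        using ord1_first[OF Dv Db] by auto
      moreover have e: "v (x + z + h) = v (x + h + z)" by (simp add: add_ac)
      ultimately have "?D \<le> 2 * ?d * N * ?s" unfolding abs_le_iff e by linarith
      also have "\<dots> \<le> 2 * ?d * N * (C\<beta> * \<psi> ?s)"
        using s_le_psi[OF z] N by (intro mult_left_mono) auto
      finally have D: "?D \<le> 2 * ?d * N * (C\<beta> * \<psi> ?s)" .
      have "?D * Kf \<phi> h \<le> 2 * ?d * N * (C\<beta> * \<psi> ?s) * (mB (2 * \<delta>1) 1 h / (a1 * \<phi> 1))"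
        using kern_large[of 1 h] 4 D Kf_nonneg[of h] N pr Cbeta
        by (intro mult_mono) auto
      also have "\<dots> = 2 * ?d * N * C\<beta> * \<psi> ?s / a1 * mB (2 * \<delta>1) 1 h" using phi1 by simp
      finally show ?thesis using t1 t2 by simp
    qed
  qed
  also have "?d * N * C\<gamma> * \<psi> ?s * MC DIM('a) (1 - \<gamma>) + ?d * N * C\<beta> * \<psi> ?s * MC DIM('a) (1 - \<beta>)
         + 2 * ?d * N * C\<beta> * \<psi> ?s / a1 * MC DIM('a) (2 * \<delta>1)
      = (?d * N * C\<gamma> * MC DIM('a) (1 - \<gamma>) + ?d * N * C\<beta> * MC DIM('a) (1 - \<beta>)
          + 2 * ?d * N * C\<beta> / a1 * MC DIM('a) (2 * \<delta>1)) * \<psi> ?s"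
    by (simp add: field_simps)
  finally show ?thesis .
qed

lemma ord1_far:
  fixes v :: "'a::euclidean_space \<Rightarrow> real"
  assumes Dv: "\<And>i y t. i \<in> Basis \<Longrightarrow> ((\<lambda>t. v (y + t *\<^sub>R i)) has_real_derivative pd i (y + t *\<^sub>R i)) (at t)"
    and Db: "\<And>i y. i \<in> Basis \<Longrightarrow> \<bar>pd i y\<bar> \<le> N"
    and N: "0 \<le> N" and z: "0 < norm z" "norm z \<le> 1"
  shows "\<bar>v (y + z) - v y\<bar> \<le> N * \<psi> (norm z) * (real DIM('a) * C\<beta> * norm z powr (1 - \<beta>))"
proof -
  have "\<bar>v (y + z) - v y\<bar> \<le> real DIM('a) * N * norm z" by (rule ord1_first[OF Dv Db])
  also have "\<dots> \<le> real DIM('a) * N * (C\<beta> * \<psi> (norm z) * norm z powr (1 - \<beta>))"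
    using lin_le_psi[OF z] N by (intro mult_left_mono) auto
  finally show ?thesis by (simp add: mult_ac)
qed

end


lemma int_bound_abs:
  fixes f :: "'a::euclidean_space \<Rightarrow> real"
  assumes f: "f \<in> borel_measurable lborel" and I: "(\<integral>\<^sup>+ h. ennreal \<bar>f h\<bar> \<partial>lborel) \<le> ennreal B" and B: "0 \<le> B"
  shows "integrable lborel f" "\<bar>integral\<^sup>L lborel f\<bar> \<le> B"
proof -
  have fin: "(\<integral>\<^sup>+ h. ennreal (norm (f h)) \<partial>lborel) < \<infinity>" using I by (simp add: order_le_less_trans)
  show int: "integrable lborel f" by (rule integrableI_bounded[OF f fin])
  have "ennreal \<bar>integral\<^sup>L lborel f\<bar> \<le> (\<integral>\<^sup>+ h. ennreal (norm (f h)) \<partial>lborel)"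
    using integral_norm_bound_ennreal[OF int] by simp
  also have "\<dots> \<le> ennreal B" using I by simp
  finally show "\<bar>integral\<^sup>L lborel f\<bar> \<le> B" using B by (simp add: ennreal_le_iff)
qed

lemma nn_two:
  fixes f ga gb :: "'a::euclidean_space \<Rightarrow> real"
  assumes g: "ga \<in> borel_measurable lborel" "gb \<in> borel_measurable lborel"
    and gn: "\<And>h. 0 \<le> ga h" "\<And>h. 0 \<le> gb h"
    and c: "0 \<le> ca" "0 \<le> cb" and B: "0 \<le> Ba" "0 \<le> Bb"
    and pt: "\<And>h. f h \<le> ca * ga h + cb * gb h"
    and I1: "(\<integral>\<^sup>+ h. ennreal (ga h) \<partial>lborel) \<le> ennreal Ba"
    and I2: "(\<integral>\<^sup>+ h. ennreal (gb h) \<partial>lborel) \<le> ennreal Bb"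
  shows "(\<integral>\<^sup>+ h. ennreal (f h) \<partial>lborel) \<le> ennreal (ca * Ba + cb * Bb)"
proof -
  have "(\<integral>\<^sup>+ h. ennreal (f h) \<partial>lborel) \<le> (\<integral>\<^sup>+ h. ennreal ca * ennreal (ga h) + ennreal cb * ennreal (gb h) \<partial>lborel)"
    by (intro nn_integral_mono)
       (metis (no_types, lifting) c gn ennreal_leI ennreal_plus ennreal_mult mult_nonneg_nonneg pt add_nonneg_nonneg)
  also have "\<dots> = ennreal ca * (\<integral>\<^sup>+ h. ennreal (ga h) \<partial>lborel) + ennreal cb * (\<integral>\<^sup>+ h. ennreal (gb h) \<partial>lborel)"
    using g by (simp add: nn_integral_add nn_integral_cmult)
  also have "\<dots> \<le> ennreal ca * ennreal Ba + ennreal cb * ennreal Bb"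
    by (intro add_mono mult_left_mono I1 I2) auto
  also have "\<dots> = ennreal (ca * Ba + cb * Bb)" using c B by (simp add: ennreal_mult ennreal_plus)
  finally show ?thesis .
qed

lemma exists_unit: "\<exists>h::'a::euclidean_space. norm h = 1"
  using nonempty_Basis by (metis ex_in_conv norm_Basis)

lemma holder0:
  fixes f :: "'a::euclidean_space \<Rightarrow> real" and \<psi> :: "real \<Rightarrow> real"
  assumes ho: "holder_order \<psi> = 0" and lim: "(\<psi> \<longlongrightarrow> 0) (at_right 0)"
    and pos: "\<And>r. 0 < r \<Longrightarrow> r \<le> 1 \<Longrightarrow> 0 < \<psi> r"
    and S: "\<And>x. \<bar>f x\<bar> \<le> S" and T: "\<And>x z. 0 < norm z \<Longrightarrow> norm z \<le> 1 \<Longrightarrow> \<bar>f (x + z) - f x\<bar> \<le> T * \<psi> (norm z)"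
    and T0: "0 \<le> T"
  shows "in_C \<psi> f \<and> C_norm \<psi> f \<le> S + T"
proof -
  have mi: "multi_indices 0 = {[]::'a list}" by (auto simp: multi_indices_def)
  have g0: "\<And>\<gamma>::'a list. length \<gamma> \<le> 0 \<longleftrightarrow> \<gamma> = []" by auto
  have hq: "holder_quotients \<psi> 0 f = {\<bar>f (x + h) - f x\<bar> / \<psi> (norm h) | x h. 0 < norm h \<and> norm h \<le> 1}"
    by (simp add: holder_quotients_def)
  have qle: "\<forall>q \<in> holder_quotients \<psi> 0 f. q \<le> T"
  proof
    fix q assume "q \<in> holder_quotients \<psi> 0 f"
    then obtain x h where q: "q = \<bar>f (x + h) - f x\<bar> / \<psi> (norm h)" and h: "0 < norm h" "norm h \<le> 1"
      unfolding hq by auto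
    have "0 < \<psi> (norm h)" using pos h by auto
    thus "q \<le> T" using T[OF h, of x] q by (simp add: divide_le_eq)
  qed
  have ne: "holder_quotients \<psi> 0 f \<noteq> {}"
  proof -
    obtain h :: 'a where "norm h = 1" using exists_unit by blast
    hence "h \<noteq> 0 \<and> norm h \<le> 1" by auto
    thus ?thesis unfolding hq by auto
  qed
  have bdd: "bdd_above (holder_quotients \<psi> 0 f)" using qle by (auto intro: bdd_aboveI)
  have semi: "holder_seminorm \<psi> 0 f \<le> T"
    unfolding holder_seminorm_def using qle ne by (intro cSup_least) auto
  have c0: "C0_norm f \<le> S" unfolding C0_norm_def by (intro cSUP_least) (auto intro: S)
  have bnd: "bounded (range f)" unfolding bounded_real using S by auto
  have cont: "continuous_on UNIV f"
  proof (intro continuous_at_imp_continuous_on ballI)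
    fix x :: 'a
    show "isCont f x" unfolding continuous_at_real_range
    proof (intro allI impI)
      fix e :: real assume e: "0 < e"
      have "\<forall>\<^sub>F t in at_right 0. dist (\<psi> t) 0 < e / (T + 1)"
        using lim e T0 unfolding tendsto_iff by auto
      then obtain b where b: "b > 0" "\<And>t. 0 < t \<Longrightarrow> t < b \<Longrightarrow> \<bar>\<psi> t\<bar> < e / (T + 1)"
        unfolding eventually_at_right_field by auto
      show "\<exists>d>0. \<forall>x'. norm (x' - x) < d \<longrightarrow> \<bar>f x' - f x\<bar> < e"
      proof (intro exI[of _ "min b 1"] conjI allI impI)
        show "0 < min b 1" using b by simp
        fix x' :: 'a assume x': "norm (x' - x) < min b 1"
        show "\<bar>f x' - f x\<bar> < e"
        proof (cases "x' = x")
          case True thus ?thesis using e by simp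
        next
          case False
          let ?z = "x' - x"
          have z: "0 < norm ?z" "norm ?z \<le> 1" using False x' by auto
          have "\<bar>f x' - f x\<bar> = \<bar>f (x + ?z) - f x\<bar>" by simp
          also have "\<dots> \<le> T * \<psi> (norm ?z)" using T[OF z] by blast
          also have "\<dots> \<le> T * (e / (T + 1))"
            using b(2)[of "norm ?z"] z x' T0 by (intro mult_left_mono) auto
          also have "\<dots> < e" using e T0 by (simp add: field_simps)
          finally show ?thesis .
        qed
      qed
    qed
  qed
  have inC: "in_C \<psi> f"
    unfolding in_C_def ho using cont bnd bdd mi by (auto simp: g0)
  have "C_norm \<psi> f = C0_norm f + holder_seminorm \<psi> 0 f"
    unfolding C_norm_def ho by (simp add: Dj_norm_def mi)
  also have "\<dots> \<le> S + T" using c0 semi by simp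
  finally show ?thesis using inC by simp
qed


lemma opB_alt: "op_B a \<phi> x0 v x = (\<integral>h. (v (x + h) - v x) * (a x h - a x0 h) * Kf \<phi> h \<partial>lborel)"
  unfolding op_B_def Kf_def by (simp add: divide_inverse mult.assoc)

lemma Kf_meas:
  assumes phic: "continuous_on {0<..} \<phi>" and phip: "\<And>r. 0 < r \<Longrightarrow> 0 < \<phi> r"
  shows "(Kf \<phi> :: 'a::euclidean_space \<Rightarrow> real) \<in> borel_measurable lborel"
proof -
  have e: "Kf \<phi> = (\<lambda>h::'a. if h \<in> - {0} then inverse (norm h ^ DIM('a) * \<phi> (norm h)) else 0)"
    by (auto simp: Kf_def fun_eq_iff)
  have c1: "continuous_on (- {0::'a}) (\<lambda>h. \<phi> (norm h))"
    by (rule continuous_on_compose2[OF phic continuous_on_norm_id]) auto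
  have "(\<lambda>h::'a. if h \<in> - {0} then inverse (norm h ^ DIM('a) * \<phi> (norm h)) else 0) \<in> borel_measurable borel"
    by (rule borel_measurable_continuous_on_if) (auto intro!: continuous_intros c1 simp: phip less_imp_neq[symmetric])
  thus ?thesis unfolding e measurable_lborel2 .
qed

lemma cont_shift_meas:
  fixes v :: "'a::euclidean_space \<Rightarrow> real"
  assumes "continuous_on UNIV v"
  shows "(\<lambda>h. v (x + h)) \<in> borel_measurable lborel"
proof -
  have "continuous_on UNIV (\<lambda>h. v (x + h))"
    by (rule continuous_on_compose2[OF assms]) (auto intro!: continuous_intros)
  thus ?thesis unfolding measurable_lborel2 by (rule borel_measurable_continuous_onI)
qed

lemma opB_bound:
  fixes v :: "'a::euclidean_space \<Rightarrow> real"
  assumes phic: "continuous_on {0<..} \<phi>" and phip: "\<And>r. 0 < r \<Longrightarrow> 0 < \<phi> r" and cont: "continuous_on UNIV v"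
    and am: "(\<lambda>h. a x h) \<in> borel_measurable lborel" "(\<lambda>h. a x0 h) \<in> borel_measurable lborel"
    and ab: "\<And>h. \<bar>a x h - a x0 h\<bar> \<le> L" and Kn: "\<And>h. 0 \<le> Kf \<phi> (h::'a)"
    and J: "(\<integral>\<^sup>+ h. ennreal (\<bar>v (x + h) - v x\<bar> * Kf \<phi> h) \<partial>lborel) \<le> ennreal J" and J0: "0 \<le> J"
  shows "integrable lborel (\<lambda>h. (v (x + h) - v x) * (a x h - a x0 h) * Kf \<phi> h)"
    "\<bar>op_B a \<phi> x0 v x\<bar> \<le> L * J"
proof -
  have L: "0 \<le> L" using ab[of 0] by linarith
  note [measurable] = Kf_meas[OF phic phip] cont_shift_meas[OF cont] am
  have m: "(\<lambda>h. (v (x + h) - v x) * (a x h - a x0 h) * Kf \<phi> h) \<in> borel_measurable lborel" by measurable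
  have I: "(\<integral>\<^sup>+ h. ennreal \<bar>(v (x + h) - v x) * (a x h - a x0 h) * Kf \<phi> h\<bar> \<partial>lborel) \<le> ennreal (L * J + 0 * 0)"
  proof (rule nn_two[where ga = "\<lambda>h. \<bar>v (x + h) - v x\<bar> * Kf \<phi> h" and gb = "\<lambda>_. 0" and ca = L and cb = 0
       and Ba = J and Bb = 0])
    fix h :: 'a
    show "\<bar>(v (x + h) - v x) * (a x h - a x0 h) * Kf \<phi> h\<bar> \<le> L * (\<bar>v (x + h) - v x\<bar> * Kf \<phi> h) + 0 * 0"
    proof -
      have "\<bar>(v (x + h) - v x) * (a x h - a x0 h) * Kf \<phi> h\<bar> = \<bar>v (x + h) - v x\<bar> * \<bar>a x h - a x0 h\<bar> * Kf \<phi> h"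
        using Kn[of h] by (simp add: abs_mult)
      also have "\<dots> \<le> \<bar>v (x + h) - v x\<bar> * L * Kf \<phi> h"
        using ab[of h] Kn[of h] by (intro mult_right_mono mult_left_mono) auto
      finally show ?thesis by (simp add: mult_ac)
    qed
  qed (use L J0 J Kn in auto)
  show "integrable lborel (\<lambda>h. (v (x + h) - v x) * (a x h - a x0 h) * Kf \<phi> h)"
    using int_bound_abs(1)[OF m] I L J0 by simp
  show "\<bar>op_B a \<phi> x0 v x\<bar> \<le> L * J"
    unfolding opB_alt using int_bound_abs(2)[OF m] I L J0 by simp
qed

lemma opB_diff:
  fixes v :: "'a::euclidean_space \<Rightarrow> real"
  assumes i1: "integrable lborel (\<lambda>h. (v (x1 + h) - v x1) * (a x1 h - a x0 h) * Kf \<phi> h)"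
    and i0: "integrable lborel (\<lambda>h. (v (x + h) - v x) * (a x h - a x0 h) * Kf \<phi> h)"
    and pt: "\<And>h. \<bar>(v (x1 + h) - v x1) * (a x1 h - a x0 h) * Kf \<phi> h - (v (x + h) - v x) * (a x h - a x0 h) * Kf \<phi> h\<bar> \<le> G h"
    and I: "(\<integral>\<^sup>+ h. ennreal (G h) \<partial>lborel) \<le> ennreal B" and B: "0 \<le> B"
  shows "\<bar>op_B a \<phi> x0 v x1 - op_B a \<phi> x0 v x\<bar> \<le> B"
proof -
  let ?F1 = "\<lambda>h. (v (x1 + h) - v x1) * (a x1 h - a x0 h) * Kf \<phi> h"
  let ?F0 = "\<lambda>h. (v (x + h) - v x) * (a x h - a x0 h) * Kf \<phi> h"
  have m: "(\<lambda>h. ?F1 h - ?F0 h) \<in> borel_measurable lborel"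
    using i1 i0 by (intro borel_measurable_diff) auto
  have "(\<integral>\<^sup>+ h. ennreal \<bar>?F1 h - ?F0 h\<bar> \<partial>lborel) \<le> (\<integral>\<^sup>+ h. ennreal (G h) \<partial>lborel)"
    by (intro nn_integral_mono ennreal_leI pt)
  also note I
  finally have "\<bar>integral\<^sup>L lborel (\<lambda>h. ?F1 h - ?F0 h)\<bar> \<le> B" using int_bound_abs(2)[OF m _ B] by blast
  moreover have "integral\<^sup>L lborel (\<lambda>h. ?F1 h - ?F0 h) = op_B a \<phi> x0 v x1 - op_B a \<phi> x0 v x"
    unfolding opB_alt using i1 i0 by (rule Bochner_Integration.integral_diff)
  ultimately show ?thesis by simp
qed


context setting begin

lemma psi_eps: "0 < e \<Longrightarrow> \<exists>b>0. \<forall>t. 0 < t \<longrightarrow> t < b \<longrightarrow> \<psi> t < e"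
proof -
  assume e: "0 < e"
  have "\<forall>\<^sub>F t in at_right 0. dist (\<psi> t) 0 < e" using psi_lim e unfolding tendsto_iff by auto
  then obtain b where "b > 0" "\<And>t. 0 < t \<Longrightarrow> t < b \<Longrightarrow> \<bar>\<psi> t\<bar> < e"
    unfolding eventually_at_right_field by auto
  thus ?thesis by (metis abs_less_iff)
qed

lemma assembly:
  fixes P :: "('a::euclidean_space \<Rightarrow> real) \<Rightarrow> bool" and V0 Nn :: "('a \<Rightarrow> real) \<Rightarrow> real"
    and a :: "'a \<Rightarrow> 'a \<Rightarrow> real" and \<Lambda>1 \<Lambda>2 \<Lambda>3 \<epsilon> :: real
  assumes phic: "continuous_on {0<..} \<phi>"
    and Lam: "0 < \<Lambda>1" "\<Lambda>1 \<le> \<Lambda>2" "1 \<le> \<Lambda>3"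
    and a_range: "\<forall>x h. \<Lambda>1 \<le> a x h \<and> a x h \<le> \<Lambda>2"
    and a_meas: "\<forall>x. (\<lambda>h. a x h) \<in> borel_measurable lborel"
    and a_cont: "\<forall>z. 0 < norm z \<and> norm z \<le> 1 \<longrightarrow>
        (\<forall>x h. 0 < norm h \<longrightarrow> \<bar>a (x + z) h - a x h\<bar> \<le> \<Lambda>3 * \<psi> (norm z))"
    and P0: "\<And>v. P v \<Longrightarrow> continuous_on UNIV v \<and> (\<forall>y. \<bar>v y\<bar> \<le> V0 v) \<and> V0 v \<le> Nn v"
    and P1: "\<And>e. 0 < e \<Longrightarrow> \<exists>A\<ge>0. \<forall>v x. P v \<longrightarrow>
        (\<integral>\<^sup>+ h. ennreal (\<bar>v (x + h) - v x\<bar> * Kf \<phi> h) \<partial>lborel) \<le> ennreal (A * V0 v + e * Nn v)"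
    and P2: "\<exists>Q\<ge>0. \<forall>v x z. P v \<longrightarrow> 0 < norm z \<longrightarrow> norm z \<le> 1 \<longrightarrow>
        (\<integral>\<^sup>+ h. ennreal (\<bar>v (x + z + h) - v (x + z) - (v (x + h) - v x)\<bar> * Kf \<phi> h) \<partial>lborel)
          \<le> ennreal (Q * \<psi> (norm z) * Nn v)"
    and P3: "\<And>e. 0 < e \<Longrightarrow> \<exists>\<eta>>0. \<eta> \<le> 1 \<and> (\<forall>v y z. P v \<longrightarrow> 0 < norm z \<longrightarrow> norm z \<le> \<eta> \<longrightarrow>
        \<bar>v (y + z) - v y\<bar> \<le> e * \<psi> (norm z) * Nn v)"
    and eps: "0 < \<epsilon>"
  shows "\<exists>r C. 0 < r \<and> r < 1/4 \<and> 0 < C \<and> (\<forall>x0 v. P v \<and> {x. v x \<noteq> 0} \<subseteq> ball x0 (2 * r) \<longrightarrow>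
     (\<exists>S T. 0 \<le> T \<and> (\<forall>x. \<bar>op_B a \<phi> x0 v x\<bar> \<le> S) \<and>
        (\<forall>x z. 0 < norm z \<and> norm z \<le> 1 \<longrightarrow> \<bar>op_B a \<phi> x0 v (x + z) - op_B a \<phi> x0 v x\<bar> \<le> T * \<psi> (norm z)) \<and>
        S + T \<le> C * V0 v + \<epsilon> * Nn v))"
proof -
  have L2: "0 < \<Lambda>2" and L3: "0 < \<Lambda>3" using Lam by auto
  define e where "e = \<epsilon> / 8"
  have e: "0 < e" using eps by (simp add: e_def)
  obtain Q where Q: "0 \<le> Q" and Qb: "\<forall>v x z. P v \<longrightarrow> 0 < norm z \<longrightarrow> norm z \<le> 1 \<longrightarrow>
        (\<integral>\<^sup>+ h. ennreal (\<bar>v (x + z + h) - v (x + z) - (v (x + h) - v x)\<bar> * Kf \<phi> h) \<partial>lborel)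
          \<le> ennreal (Q * \<psi> (norm z) * Nn v)" using P2 by blast
  obtain A1 where A1: "0 \<le> A1" and J1: "\<forall>v x. P v \<longrightarrow>
        (\<integral>\<^sup>+ h. ennreal (\<bar>v (x + h) - v x\<bar> * Kf \<phi> h) \<partial>lborel) \<le> ennreal (A1 * V0 v + e / \<Lambda>3 * Nn v)"
    using P1[of "e / \<Lambda>3"] e L3 by auto
  obtain b where b: "0 < b" "\<And>t. 0 < t \<Longrightarrow> t < b \<Longrightarrow> \<psi> t < e * c\<psi> / (\<Lambda>3 * (Q + 1))"
    using psi_eps[of "e * c\<psi> / (\<Lambda>3 * (Q + 1))"] e cpsi L3 Q by auto
  define r where "r = min (1/8) (b/8)"
  have r: "0 < r" "r < 1/4" "4 * r < b" "4 * r \<le> 1" using b by (auto simp: r_def)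
  have bb: "\<And>x0 x1 h. norm (x1 - x0) \<le> 4 * r \<Longrightarrow> 0 < norm h \<Longrightarrow> \<bar>a x1 h - a x0 h\<bar> \<le> e / (Q + 1)"
  proof -
    fix x0 x1 :: 'a and h :: 'a
    assume d: "norm (x1 - x0) \<le> 4 * r" and h: "0 < norm h"
    show "\<bar>a x1 h - a x0 h\<bar> \<le> e / (Q + 1)"
    proof (cases "x1 = x0")
      case True thus ?thesis using e Q by simp
    next
      case False
      let ?z = "x1 - x0"
      have z: "0 < norm ?z" "norm ?z \<le> 1" using False d r by auto
      have "\<bar>a (x0 + ?z) h - a x0 h\<bar> \<le> \<Lambda>3 * \<psi> (norm ?z)" using a_cont z h by blast
      moreover have "c\<psi> * \<psi> (norm ?z) \<le> \<psi> (4 * r)" using psi_lower[of "norm ?z" "4*r"] z d r by auto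
      moreover have "\<psi> (4 * r) < e * c\<psi> / (\<Lambda>3 * (Q + 1))" using b r by auto
      ultimately have m: "\<bar>a x1 h - a x0 h\<bar> \<le> \<Lambda>3 * \<psi> (norm ?z)" and
        k: "c\<psi> * \<psi> (norm ?z) < c\<psi> * (e / (\<Lambda>3 * (Q + 1)))" by (auto simp: mult.commute)
      from k have "\<psi> (norm ?z) < e / (\<Lambda>3 * (Q + 1))" using cpsi by (simp only: mult_less_cancel_left_pos)
      hence "\<Lambda>3 * \<psi> (norm ?z) < \<Lambda>3 * (e / (\<Lambda>3 * (Q + 1)))" using L3 by (intro mult_strict_left_mono)
      also have "\<Lambda>3 * (e / (\<Lambda>3 * (Q + 1))) = e / (Q + 1)" using L3 by simp
      finally show ?thesis using m by simp
    qed
  qed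
  define KB where "KB = MC DIM('a) (2 * \<delta>1) / (a1 * \<phi> r)"
  have pr: "0 < \<phi> r" using phi_pos r by auto
  have KB0: "0 \<le> KB" unfolding KB_def using MC_nonneg[of "2*\<delta>1"] d1 a1 pr by simp
  have KBi: "(\<integral>\<^sup>+ h. ennreal (indicator {h::'a. r < norm h} h * Kf \<phi> h) \<partial>lborel) \<le> ennreal KB"
  proof -
    have "(\<integral>\<^sup>+ h. ennreal (indicator {h::'a. r < norm h} h * Kf \<phi> h) \<partial>lborel)
        \<le> ennreal (0 * MC DIM('a) 1 + 1 / (a1 * \<phi> r) * MC DIM('a) (2 * \<delta>1) + 0 * MC DIM('a) 1)"
    proof (rule int_bound3)
      fix h :: 'a
      show "indicator {h::'a. r < norm h} h * Kf \<phi> h \<le> 0 * mA 1 1 h + 1 / (a1 * \<phi> r) * mB (2 * \<delta>1) r h + 0 * mB 1 1 h"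
        using kern_large[of r h] r mB_nonneg[of "2*\<delta>1" r h] a1 pr by (auto simp: indicator_def)
    qed (use a1 pr d1 r in auto)
    thus ?thesis by (simp add: KB_def)
  qed
  obtain \<eta>0 where eta0: "0 < \<eta>0" "\<eta>0 \<le> 1" and F3: "\<forall>v y z. P v \<longrightarrow> 0 < norm z \<longrightarrow> norm z \<le> \<eta>0 \<longrightarrow>
        \<bar>v (y + z) - v y\<bar> \<le> e / (\<Lambda>2 * (KB + 1)) * \<psi> (norm z) * Nn v"
    using P3[of "e / (\<Lambda>2 * (KB + 1))"] e L2 KB0 by auto
  define \<eta> where "\<eta> = min \<eta>0 r"
  have eta: "0 < \<eta>" "\<eta> \<le> 1" "\<eta> \<le> r" "\<eta> \<le> \<eta>0" using eta0 r by (auto simp: \<eta>_def)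
  have pe: "0 < \<psi> \<eta>" using psi_pos eta by auto
  obtain A2 where A2: "0 \<le> A2" and J2: "\<forall>v x. P v \<longrightarrow>
        (\<integral>\<^sup>+ h. ennreal (\<bar>v (x + h) - v x\<bar> * Kf \<phi> h) \<partial>lborel) \<le> ennreal (A2 * V0 v + e * c\<psi> * \<psi> \<eta> / (2 * \<Lambda>2) * Nn v)"
    using P1[of "e * c\<psi> * \<psi> \<eta> / (2 * \<Lambda>2)"] e L2 cpsi pe by auto
  obtain A3 where A3: "0 \<le> A3" and J3: "\<forall>v x. P v \<longrightarrow>
        (\<integral>\<^sup>+ h. ennreal (\<bar>v (x + h) - v x\<bar> * Kf \<phi> h) \<partial>lborel) \<le> ennreal (A3 * V0 v + e / \<Lambda>2 * Nn v)"
    using P1[of "e / \<Lambda>2"] e L2 by auto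
  define C where "C = \<Lambda>2 * A3 + \<Lambda>3 * A1 + 2 * \<Lambda>2 * A2 / (c\<psi> * \<psi> \<eta>) + 1"
  have C1: "0 \<le> \<Lambda>2 * A3 + \<Lambda>3 * A1 + 2 * \<Lambda>2 * A2 / (c\<psi> * \<psi> \<eta>)"
    using L2 L3 A1 A2 A3 cpsi pe by simp
  show ?thesis
  proof (rule exI[of _ r], rule exI[of _ C], intro conjI allI impI)
    show "0 < r" "r < 1/4" using r by auto
    show "0 < C" using C1 by (simp add: C_def)
    fix x0 :: 'a and v :: "'a \<Rightarrow> real"
    assume asm: "P v \<and> {x. v x \<noteq> 0} \<subseteq> ball x0 (2 * r)"
    hence Pv: "P v" by simp
    have cont: "continuous_on UNIV v" and Vb: "\<And>y. \<bar>v y\<bar> \<le> V0 v" and VN: "V0 v \<le> Nn v"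
      using P0[OF Pv] by auto
    have V0: "0 \<le> V0 v" using Vb[of 0] by linarith
    have N0: "0 \<le> Nn v" using V0 VN by linarith
    have vz: "\<And>y. 2 * r \<le> norm (y - x0) \<Longrightarrow> v y = 0"
    proof (rule ccontr)
      fix y assume "2 * r \<le> norm (y - x0)" "v y \<noteq> 0"
      hence "y \<in> ball x0 (2 * r)" using asm by auto
      hence "norm (y - x0) < 2 * r" by (simp add: dist_norm norm_minus_commute)
      thus False using \<open>2 * r \<le> norm (y - x0)\<close> by simp
    qed
    have ab: "\<bar>a x h - a x0 h\<bar> \<le> \<Lambda>2" for x h
    proof -
      have "\<Lambda>1 \<le> a x h" "a x h \<le> \<Lambda>2" "\<Lambda>1 \<le> a x0 h" "a x0 h \<le> \<Lambda>2" using a_range by auto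
      thus ?thesis using Lam by linarith
    qed
    have Kn: "\<And>h. 0 \<le> Kf \<phi> (h::'a)" by (rule Kf_nonneg)
    have am: "\<And>x. (\<lambda>h. a x h) \<in> borel_measurable lborel" using a_meas by blast
    let ?B = "op_B a \<phi> x0 v"
    let ?F = "\<lambda>x h. (v (x + h) - v x) * (a x h - a x0 h) * Kf \<phi> h"
    have OB: "integrable lborel (?F x) \<and> \<bar>?B x\<bar> \<le> \<Lambda>2 * J"
      if "(\<integral>\<^sup>+ h. ennreal (\<bar>v (x + h) - v x\<bar> * Kf \<phi> h) \<partial>lborel) \<le> ennreal J" "0 \<le> J" for x J
      using opB_bound[OF phic phi_pos cont am[of x] am[of x0] ab[of x] Kn that] by blast
    have J3v: "\<And>x. (\<integral>\<^sup>+ h. ennreal (\<bar>v (x + h) - v x\<bar> * Kf \<phi> h) \<partial>lborel) \<le> ennreal (A3 * V0 v + e / \<Lambda>2 * Nn v)"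
      using J3 Pv by blast
    have J3n: "0 \<le> A3 * V0 v + e / \<Lambda>2 * Nn v" using A3 V0 e L2 N0 by simp
    have intF: "\<And>x. integrable lborel (?F x)" using OB[OF J3v J3n] by blast
    have Bsup: "\<And>x. \<bar>?B x\<bar> \<le> \<Lambda>2 * (A3 * V0 v + e / \<Lambda>2 * Nn v)" using OB[OF J3v J3n] by blast
    have J2v: "\<And>x. (\<integral>\<^sup>+ h. ennreal (\<bar>v (x + h) - v x\<bar> * Kf \<phi> h) \<partial>lborel) \<le> ennreal (A2 * V0 v + e * c\<psi> * \<psi> \<eta> / (2 * \<Lambda>2) * Nn v)"
      using J2 Pv by blast
    have J2n: "0 \<le> A2 * V0 v + e * c\<psi> * \<psi> \<eta> / (2 * \<Lambda>2) * Nn v" using A2 V0 e L2 N0 cpsi pe by simp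
    have Bsup2: "\<And>x. \<bar>?B x\<bar> \<le> \<Lambda>2 * (A2 * V0 v + e * c\<psi> * \<psi> \<eta> / (2 * \<Lambda>2) * Nn v)"
      using OB[OF J2v J2n] by blast
    have J1v: "\<And>x. (\<integral>\<^sup>+ h. ennreal (\<bar>v (x + h) - v x\<bar> * Kf \<phi> h) \<partial>lborel) \<le> ennreal (A1 * V0 v + e / \<Lambda>3 * Nn v)"
      using J1 Pv by blast
    have J1n: "0 \<le> A1 * V0 v + e / \<Lambda>3 * Nn v" using A1 V0 e L3 N0 by simp
    note [measurable] = Kf_meas[OF phic phi_pos] cont_shift_meas[OF cont] am
    define S where "S = \<Lambda>2 * (A3 * V0 v + e / \<Lambda>2 * Nn v)"
    define T where "T = (\<Lambda>3 * A1 + 2 * \<Lambda>2 * A2 / (c\<psi> * \<psi> \<eta>)) * V0 v + 2 * e * Nn v"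
    have T0: "0 \<le> T" unfolding T_def using L2 L3 A1 A2 cpsi pe V0 e N0 by simp
    have Hol: "\<bar>?B (x + z) - ?B x\<bar> \<le> T * \<psi> (norm z)" if z: "0 < norm z" "norm z \<le> 1" for x z
    proof -
      let ?x1 = "x + z"
      have pz: "0 < \<psi> (norm z)" using psi_pos z by auto
      have Dpt: "\<bar>?F ?x1 h - ?F x h\<bar> \<le> \<bar>v (?x1 + h) - v ?x1 - (v (x + h) - v x)\<bar> * \<bar>a ?x1 h - a x0 h\<bar> * Kf \<phi> h
           + \<bar>v (x + h) - v x\<bar> * \<bar>a ?x1 h - a x h\<bar> * Kf \<phi> h" for h
      proof -
        have "?F ?x1 h - ?F x h = (v (?x1 + h) - v ?x1 - (v (x + h) - v x)) * (a ?x1 h - a x0 h) * Kf \<phi> h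
           + (v (x + h) - v x) * (a ?x1 h - a x h) * Kf \<phi> h" by (simp add: algebra_simps)
        hence "\<bar>?F ?x1 h - ?F x h\<bar> \<le> \<bar>(v (?x1 + h) - v ?x1 - (v (x + h) - v x)) * (a ?x1 h - a x0 h) * Kf \<phi> h\<bar>
           + \<bar>(v (x + h) - v x) * (a ?x1 h - a x h) * Kf \<phi> h\<bar>" by (simp only: abs_triangle_ineq)
        thus ?thesis using Kn[of h] by (simp add: abs_mult)
      qed
      have acz: "\<bar>a ?x1 h - a x h\<bar> \<le> \<Lambda>3 * \<psi> (norm z)" if "0 < norm h" for h
        using a_cont z that by blast
      have II: "\<bar>v (x + h) - v x\<bar> * \<bar>a ?x1 h - a x h\<bar> * Kf \<phi> h \<le> \<Lambda>3 * \<psi> (norm z) * (\<bar>v (x + h) - v x\<bar> * Kf \<phi> h)" for h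
      proof (cases "h = 0")
        case True thus ?thesis by (simp add: Kf_zero)
      next
        case False
        hence "\<bar>a ?x1 h - a x h\<bar> \<le> \<Lambda>3 * \<psi> (norm z)" using acz by simp
        hence "\<bar>v (x + h) - v x\<bar> * \<bar>a ?x1 h - a x h\<bar> * Kf \<phi> h \<le> \<bar>v (x + h) - v x\<bar> * (\<Lambda>3 * \<psi> (norm z)) * Kf \<phi> h"
          using Kn[of h] by (intro mult_right_mono mult_left_mono) auto
        thus ?thesis by (simp add: mult_ac)
      qed
      consider "\<eta> < norm z" | "norm z \<le> \<eta>" "norm (?x1 - x0) \<le> 4 * r" | "norm z \<le> \<eta>" "4 * r < norm (?x1 - x0)" by linarith
      then show ?thesis
      proof cases
        case 1
        have "c\<psi> * \<psi> \<eta> \<le> \<psi> (norm z)" using psi_lower[of \<eta> "norm z"] 1 eta z by auto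
        have "\<bar>?B ?x1 - ?B x\<bar> \<le> 2 * (\<Lambda>2 * (A2 * V0 v + e * c\<psi> * \<psi> \<eta> / (2 * \<Lambda>2) * Nn v))"
          using Bsup2[of ?x1] Bsup2[of x] by linarith
        also have "\<dots> = (2 * \<Lambda>2 * A2 / (c\<psi> * \<psi> \<eta>) * V0 v + e * Nn v) * (c\<psi> * \<psi> \<eta>)"
          using L2 cpsi pe by (simp add: field_simps)
        also have "\<dots> \<le> (2 * \<Lambda>2 * A2 / (c\<psi> * \<psi> \<eta>) * V0 v + e * Nn v) * \<psi> (norm z)"
          using \<open>c\<psi> * \<psi> \<eta> \<le> \<psi> (norm z)\<close> L2 A2 cpsi pe V0 e N0 by (intro mult_left_mono) auto
        also have "\<dots> \<le> T * \<psi> (norm z)"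
          unfolding T_def using pz L3 A1 V0 e N0 by (intro mult_right_mono) (auto simp: algebra_simps)
        finally show ?thesis .
      next
        case 2
        let ?G = "\<lambda>h. e / (Q + 1) * (\<bar>v (?x1 + h) - v ?x1 - (v (x + h) - v x)\<bar> * Kf \<phi> h)
            + \<Lambda>3 * \<psi> (norm z) * (\<bar>v (x + h) - v x\<bar> * Kf \<phi> h)"
        have pt: "\<bar>?F ?x1 h - ?F x h\<bar> \<le> ?G h" for h
        proof -
          have "\<bar>v (?x1 + h) - v ?x1 - (v (x + h) - v x)\<bar> * \<bar>a ?x1 h - a x0 h\<bar> * Kf \<phi> h
              \<le> e / (Q + 1) * (\<bar>v (?x1 + h) - v ?x1 - (v (x + h) - v x)\<bar> * Kf \<phi> h)"
          proof (cases "h = 0")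
            case True thus ?thesis by (simp add: Kf_zero)
          next
            case False
            hence "\<bar>a ?x1 h - a x0 h\<bar> \<le> e / (Q + 1)" using bb[of ?x1 x0 h] 2 by simp
            hence "\<bar>v (?x1 + h) - v ?x1 - (v (x + h) - v x)\<bar> * \<bar>a ?x1 h - a x0 h\<bar> * Kf \<phi> h
               \<le> \<bar>v (?x1 + h) - v ?x1 - (v (x + h) - v x)\<bar> * (e / (Q + 1)) * Kf \<phi> h"
              using Kn[of h] by (intro mult_right_mono mult_left_mono) auto
            thus ?thesis by (simp add: mult_ac)
          qed
          thus ?thesis using Dpt[of h] II[of h] by linarith
        qed
        have Qv: "(\<integral>\<^sup>+ h. ennreal (\<bar>v (?x1 + h) - v ?x1 - (v (x + h) - v x)\<bar> * Kf \<phi> h) \<partial>lborel)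
            \<le> ennreal (Q * \<psi> (norm z) * Nn v)" using Qb Pv z by simp
        have c1: "0 \<le> e / (Q + 1)" using e Q by simp
        have c2: "0 \<le> \<Lambda>3 * \<psi> (norm z)" using L3 pz by simp
        have b1: "0 \<le> Q * \<psi> (norm z) * Nn v" using Q pz N0 by simp
        have g1: "\<And>h. 0 \<le> \<bar>v (?x1 + h) - v ?x1 - (v (x + h) - v x)\<bar> * Kf \<phi> h" using Kn by simp
        have g2: "\<And>h. 0 \<le> \<bar>v (x + h) - v x\<bar> * Kf \<phi> h" using Kn by simp
        have m1: "(\<lambda>h. \<bar>v (?x1 + h) - v ?x1 - (v (x + h) - v x)\<bar> * Kf \<phi> h) \<in> borel_measurable lborel" by measurable
        have m2: "(\<lambda>h. \<bar>v (x + h) - v x\<bar> * Kf \<phi> h) \<in> borel_measurable lborel" by measurable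
        have I: "(\<integral>\<^sup>+ h. ennreal (?G h) \<partial>lborel)
            \<le> ennreal (e / (Q + 1) * (Q * \<psi> (norm z) * Nn v) + \<Lambda>3 * \<psi> (norm z) * (A1 * V0 v + e / \<Lambda>3 * Nn v))"
          by (rule nn_two[OF m1 m2 g1 g2 c1 c2 b1 J1n order.refl Qv J1v[of x]])
        have B0: "0 \<le> e / (Q + 1) * (Q * \<psi> (norm z) * Nn v) + \<Lambda>3 * \<psi> (norm z) * (A1 * V0 v + e / \<Lambda>3 * Nn v)"
          by (intro add_nonneg_nonneg mult_nonneg_nonneg c1 c2 b1 J1n)
        have "\<bar>?B ?x1 - ?B x\<bar> \<le> e / (Q + 1) * (Q * \<psi> (norm z) * Nn v) + \<Lambda>3 * \<psi> (norm z) * (A1 * V0 v + e / \<Lambda>3 * Nn v)"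
          by (rule opB_diff[OF intF intF pt I B0])
        also have "\<dots> \<le> T * \<psi> (norm z)"
        proof -
          have "e / (Q + 1) * (Q * \<psi> (norm z) * Nn v) = (e * Nn v) * (Q / (Q + 1)) * \<psi> (norm z)"
            using Q by (simp add: field_simps)
          also have "\<dots> \<le> (e * Nn v) * 1 * \<psi> (norm z)"
            using Q e N0 pz by (intro mult_right_mono mult_left_mono) auto
          finally have 1: "e / (Q + 1) * (Q * \<psi> (norm z) * Nn v) \<le> e * Nn v * \<psi> (norm z)" by simp
          have 2: "\<Lambda>3 * \<psi> (norm z) * (A1 * V0 v + e / \<Lambda>3 * Nn v) = (\<Lambda>3 * A1 * V0 v + e * Nn v) * \<psi> (norm z)"
            using L3 by (simp add: field_simps)
          have 3: "(\<Lambda>3 * A1 * V0 v + 2 * e * Nn v) * \<psi> (norm z) \<le> T * \<psi> (norm z)"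
            unfolding T_def using pz L2 A2 cpsi pe V0 by (intro mult_right_mono) (auto simp: algebra_simps)
          show ?thesis using 1 2 3 by (simp add: algebra_simps)
        qed
        finally show ?thesis .
      next
        case 3
        let ?e3 = "e / (\<Lambda>2 * (KB + 1))"
        let ?G = "\<lambda>h. \<Lambda>2 * ?e3 * \<psi> (norm z) * Nn v * (indicator {h::'a. r < norm h} h * Kf \<phi> h)
            + \<Lambda>3 * \<psi> (norm z) * (\<bar>v (x + h) - v x\<bar> * Kf \<phi> h)"
        have "2 * r \<le> norm (?x1 - x0)" using 3 r by linarith
        hence vx1: "v ?x1 = 0" using vz by blast
        have tri: "norm (?x1 - x0) \<le> norm (x - x0) + norm z"
          using norm_triangle_ineq[of "x - x0" z] by (simp add: algebra_simps)
        have "2 * r \<le> norm (x - x0)" using 3 eta tri r by linarith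
        hence vx: "v x = 0" using vz by blast
        have Dd: "\<bar>v (?x1 + h) - v ?x1 - (v (x + h) - v x)\<bar> \<le> ?e3 * \<psi> (norm z) * Nn v * indicator {h::'a. r < norm h} h" for h
        proof (cases "r < norm h")
          case False
          have t1: "norm (?x1 - x0) \<le> norm (?x1 + h - x0) + norm h"
            using norm_triangle_ineq4[of "?x1 + h - x0" h] by (simp add: algebra_simps)
          have t2: "norm (x - x0) \<le> norm (x + h - x0) + norm h"
            using norm_triangle_ineq4[of "x + h - x0" h] by (simp add: algebra_simps)
          have "2 * r \<le> norm (?x1 + h - x0)" using t1 False 3 r by linarith
          hence "v (?x1 + h) = 0" using vz by blast
          moreover have "2 * r \<le> norm (x + h - x0)" using t2 tri False 3 eta r by linarith
          hence "v (x + h) = 0" using vz by blast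
          moreover have "0 \<le> ?e3 * \<psi> (norm z) * Nn v" using e L2 KB0 pz N0 by simp
          ultimately show ?thesis using vx vx1 by (simp add: indicator_def)
        next
          case True
          have "\<bar>v ((x + h) + z) - v (x + h)\<bar> \<le> ?e3 * \<psi> (norm z) * Nn v"
          proof -
            have "norm z \<le> \<eta>0" using 3 eta by linarith
            thus ?thesis using F3 Pv z by blast
          qed
          moreover have "v (?x1 + h) - v ?x1 - (v (x + h) - v x) = v ((x + h) + z) - v (x + h)"
            using vx vx1 by (simp add: add_ac)
          ultimately show ?thesis using True by (simp add: indicator_def)
        qed
        have pt: "\<bar>?F ?x1 h - ?F x h\<bar> \<le> ?G h" for h
        proof -
          have "\<bar>v (?x1 + h) - v ?x1 - (v (x + h) - v x)\<bar> * \<bar>a ?x1 h - a x0 h\<bar> * Kf \<phi> h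
              \<le> (?e3 * \<psi> (norm z) * Nn v * indicator {h::'a. r < norm h} h) * \<Lambda>2 * Kf \<phi> h"
            using Dd[of h] ab[of ?x1 h] Kn[of h] by (intro mult_right_mono mult_mono) auto
          moreover have "(?e3 * \<psi> (norm z) * Nn v * indicator {h::'a. r < norm h} h) * \<Lambda>2 * Kf \<phi> h
              = \<Lambda>2 * ?e3 * \<psi> (norm z) * Nn v * (indicator {h::'a. r < norm h} h * Kf \<phi> h)"
            by (simp only: mult_ac)
          ultimately show ?thesis using Dpt[of h] II[of h] by linarith
        qed
        have c1: "0 \<le> \<Lambda>2 * ?e3 * \<psi> (norm z) * Nn v" using e KB0 L2 pz N0 by simp
        have c2: "0 \<le> \<Lambda>3 * \<psi> (norm z)" using L3 pz by simp
        have g1: "\<And>h. 0 \<le> indicator {h::'a. r < norm h} h * Kf \<phi> h" using Kn by simp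
        have g2: "\<And>h. 0 \<le> \<bar>v (x + h) - v x\<bar> * Kf \<phi> h" using Kn by simp
        have m1: "(\<lambda>h. indicator {h::'a. r < norm h} h * Kf \<phi> h) \<in> borel_measurable lborel" by measurable
        have m2: "(\<lambda>h. \<bar>v (x + h) - v x\<bar> * Kf \<phi> h) \<in> borel_measurable lborel" by measurable
        have I: "(\<integral>\<^sup>+ h. ennreal (?G h) \<partial>lborel)
            \<le> ennreal (\<Lambda>2 * ?e3 * \<psi> (norm z) * Nn v * KB + \<Lambda>3 * \<psi> (norm z) * (A1 * V0 v + e / \<Lambda>3 * Nn v))"
          by (rule nn_two[OF m1 m2 g1 g2 c1 c2 KB0 J1n order.refl KBi J1v[of x]])
        have B0: "0 \<le> \<Lambda>2 * ?e3 * \<psi> (norm z) * Nn v * KB + \<Lambda>3 * \<psi> (norm z) * (A1 * V0 v + e / \<Lambda>3 * Nn v)"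
          by (intro add_nonneg_nonneg mult_nonneg_nonneg c1 c2 KB0 J1n)
        have "\<bar>?B ?x1 - ?B x\<bar> \<le> \<Lambda>2 * ?e3 * \<psi> (norm z) * Nn v * KB + \<Lambda>3 * \<psi> (norm z) * (A1 * V0 v + e / \<Lambda>3 * Nn v)"
          by (rule opB_diff[OF intF intF pt I B0])
        also have "\<dots> \<le> T * \<psi> (norm z)"
        proof -
          have "\<Lambda>2 * ?e3 = (\<Lambda>2 * e) / (\<Lambda>2 * (KB + 1))" by simp
          also have "\<dots> = e / (KB + 1)" using L2 by (intro mult_divide_mult_cancel_left) simp
          finally have k: "\<Lambda>2 * ?e3 = e / (KB + 1)" .
          have "\<Lambda>2 * ?e3 * \<psi> (norm z) * Nn v * KB = (e * Nn v) * (KB / (KB + 1)) * \<psi> (norm z)"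
            unfolding k by (simp add: mult_ac divide_inverse)
          also have "\<dots> \<le> (e * Nn v) * 1 * \<psi> (norm z)"
            using KB0 e N0 pz by (intro mult_right_mono mult_left_mono) auto
          finally have 1: "\<Lambda>2 * ?e3 * \<psi> (norm z) * Nn v * KB \<le> e * Nn v * \<psi> (norm z)" by simp
          have 2: "\<Lambda>3 * \<psi> (norm z) * (A1 * V0 v + e / \<Lambda>3 * Nn v) = (\<Lambda>3 * A1 * V0 v + e * Nn v) * \<psi> (norm z)"
            using L3 by (simp add: field_simps)
          have 3: "(\<Lambda>3 * A1 * V0 v + 2 * e * Nn v) * \<psi> (norm z) \<le> T * \<psi> (norm z)"
            unfolding T_def using pz L2 A2 cpsi pe V0 by (intro mult_right_mono) (auto simp: algebra_simps)
          show ?thesis using 1 2 3 by (simp add: algebra_simps)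
        qed
        finally show ?thesis .
      qed
    qed
    show "\<exists>S T. 0 \<le> T \<and> (\<forall>x. \<bar>?B x\<bar> \<le> S) \<and>
        (\<forall>x z. 0 < norm z \<and> norm z \<le> 1 \<longrightarrow> \<bar>?B (x + z) - ?B x\<bar> \<le> T * \<psi> (norm z)) \<and>
        S + T \<le> C * V0 v + \<epsilon> * Nn v"
    proof (rule exI[of _ S], rule exI[of _ T], intro conjI allI impI)
      show "0 \<le> T" by (rule T0)
      show "\<bar>?B x\<bar> \<le> S" for x using Bsup[of x] by (simp add: S_def)
      show "\<bar>?B (x + z) - ?B x\<bar> \<le> T * \<psi> (norm z)" if "0 < norm z \<and> norm z \<le> 1" for x z
        using Hol that by blast
      have "S + T = (C - 1) * V0 v + 3 * e * Nn v"
        unfolding S_def T_def C_def using L2 by (simp add: field_simps)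
      also have "\<dots> \<le> C * V0 v + \<epsilon> * Nn v"
        using V0 N0 e by (simp add: e_def algebra_simps mult_right_mono)
      finally show "S + T \<le> C * V0 v + \<epsilon> * Nn v" .
    qed
  qed
qed

end


lemma pow_small:
  fixes p e :: real
  assumes p: "0 < p" and e: "0 < e"
  shows "\<exists>\<eta>>0. \<eta> \<le> 1 \<and> (\<forall>t. 0 < t \<and> t \<le> \<eta> \<longrightarrow> t powr p \<le> e)"
proof (intro exI[of _ "min 1 (e powr (1/p))"] conjI allI impI)
  show "0 < min 1 (e powr (1/p))" using e by simp
  show "min 1 (e powr (1/p)) \<le> 1" by simp
  fix t assume t: "0 < t \<and> t \<le> min 1 (e powr (1/p))"
  have "t powr p \<le> (e powr (1/p)) powr p" using t p by (intro powr_mono2) auto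
  also have "\<dots> = e" using p e by (simp add: powr_powr)
  finally show "t powr p \<le> e" .
qed

context setting begin

lemma phi_le_pow:
  assumes "0 < t" "t \<le> 1"
  shows "\<phi> t \<le> t powr (2 * \<delta>1) / a1"
proof -
  have "a1 * (1/t) powr (2 * \<delta>1) * \<phi> t \<le> \<phi> ((1/t) * t)" using scal[of "1/t" t] assms by simp
  hence "a1 * \<phi> t / t powr (2 * \<delta>1) \<le> 1" using assms phi1 by (simp add: powr_divide)
  thus ?thesis using assms a1 by (simp add: field_simps)
qed

lemma facts0:
  fixes P :: "('a::euclidean_space \<Rightarrow> real) \<Rightarrow> bool" and V0 Nn :: "('a \<Rightarrow> real) \<Rightarrow> real"
  assumes H: "\<And>v. P v \<Longrightarrow> (\<forall>y. \<bar>v y\<bar> \<le> V0 v) \<and> 0 \<le> Nn v \<and>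
      (\<forall>x h. 0 < norm h \<and> norm h \<le> 1 \<longrightarrow> \<bar>v (x + h) - v x\<bar> \<le> Nn v * (\<phi> (norm h) * \<psi> (norm h)))"
  shows "\<And>e. 0 < e \<Longrightarrow> \<exists>A\<ge>0. \<forall>v x. P v \<longrightarrow>
        (\<integral>\<^sup>+ h. ennreal (\<bar>v (x + h) - v x\<bar> * Kf \<phi> h) \<partial>lborel) \<le> ennreal (A * V0 v + e * Nn v)"
    and "\<exists>Q\<ge>0. \<forall>v x z. P v \<longrightarrow> 0 < norm z \<longrightarrow> norm z \<le> 1 \<longrightarrow>
        (\<integral>\<^sup>+ h. ennreal (\<bar>v (x + z + h) - v (x + z) - (v (x + h) - v x)\<bar> * Kf \<phi> h) \<partial>lborel)
          \<le> ennreal (Q * \<psi> (norm z) * Nn v)"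
    and "\<And>e. 0 < e \<Longrightarrow> \<exists>\<eta>>0. \<eta> \<le> 1 \<and> (\<forall>v y z. P v \<longrightarrow> 0 < norm z \<longrightarrow> norm z \<le> \<eta> \<longrightarrow>
        \<bar>v (y + z) - v y\<bar> \<le> e * \<psi> (norm z) * Nn v)"
proof -
  let ?M = "MC DIM('a)"
  have MA: "0 \<le> ?M \<alpha>" using MC_nonneg alpha by blast
  have MD: "0 \<le> ?M (2 * \<delta>1)" using MC_nonneg d1 by simp
  fix e :: real assume e: "0 < e"
  obtain b where b: "0 < b" "\<And>t. 0 < t \<Longrightarrow> t < b \<Longrightarrow> \<psi> t < e * c\<psi> / (?M \<alpha> + 1)"
    using psi_eps[of "e * c\<psi> / (?M \<alpha> + 1)"] e cpsi MA by auto
  define \<rho> where "\<rho> = min 1 (b/2)"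
  have rho: "0 < \<rho>" "\<rho> \<le> 1" "\<rho> < b" using b by (auto simp: \<rho>_def)
  have prho: "0 < \<phi> \<rho>" "0 < \<psi> \<rho>" using phi_pos psi_pos rho by auto
  have ps: "\<psi> \<rho> / c\<psi> * ?M \<alpha> \<le> e"
  proof -
    have "\<psi> \<rho> < e * c\<psi> / (?M \<alpha> + 1)" using b rho by auto
    hence "\<psi> \<rho> / c\<psi> * (?M \<alpha> + 1) < e" using cpsi MA by (simp add: field_simps)
    moreover have "\<psi> \<rho> / c\<psi> * ?M \<alpha> \<le> \<psi> \<rho> / c\<psi> * (?M \<alpha> + 1)" using prho cpsi
      by (intro mult_left_mono) auto
    ultimately show ?thesis by linarith
  qed
  show "\<exists>A\<ge>0. \<forall>v x. P v \<longrightarrow>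
        (\<integral>\<^sup>+ h. ennreal (\<bar>v (x + h) - v x\<bar> * Kf \<phi> h) \<partial>lborel) \<le> ennreal (A * V0 v + e * Nn v)"
  proof (rule exI[of _ "2 / (a1 * \<phi> \<rho>) * ?M (2 * \<delta>1)"], intro conjI allI impI)
    show "0 \<le> 2 / (a1 * \<phi> \<rho>) * ?M (2 * \<delta>1)" using a1 prho MD by simp
    fix v x assume Pv: "P v"
    have Vb: "\<And>y. \<bar>v y\<bar> \<le> V0 v" and N: "0 \<le> Nn v"
      and Hv: "\<And>x h. 0 < norm h \<Longrightarrow> norm h \<le> 1 \<Longrightarrow> \<bar>v (x + h) - v x\<bar> \<le> Nn v * (\<phi> (norm h) * \<psi> (norm h))"
      using H[OF Pv] by auto
    have "(\<integral>\<^sup>+ h. ennreal (\<bar>v (x + h) - v x\<bar> * Kf \<phi> h) \<partial>lborel)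
      \<le> ennreal (Nn v * \<psi> \<rho> / c\<psi> * ?M \<alpha> + 2 * V0 v / (a1 * \<phi> \<rho>) * ?M (2 * \<delta>1) + 0 * ?M 1)"
      by (rule ord0_J[OF Vb Hv N rho(1,2)])
    also have "\<dots> \<le> ennreal (2 / (a1 * \<phi> \<rho>) * ?M (2 * \<delta>1) * V0 v + e * Nn v)"
    proof (rule ennreal_leI)
      have "Nn v * \<psi> \<rho> / c\<psi> * ?M \<alpha> = Nn v * (\<psi> \<rho> / c\<psi> * ?M \<alpha>)" by simp
      also have "\<dots> \<le> Nn v * e" using ps N by (rule mult_left_mono)
      finally show "Nn v * \<psi> \<rho> / c\<psi> * ?M \<alpha> + 2 * V0 v / (a1 * \<phi> \<rho>) * ?M (2 * \<delta>1) + 0 * ?M 1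
          \<le> 2 / (a1 * \<phi> \<rho>) * ?M (2 * \<delta>1) * V0 v + e * Nn v" by (simp add: mult_ac)
    qed
    finally show "(\<integral>\<^sup>+ h. ennreal (\<bar>v (x + h) - v x\<bar> * Kf \<phi> h) \<partial>lborel)
      \<le> ennreal (2 / (a1 * \<phi> \<rho>) * ?M (2 * \<delta>1) * V0 v + e * Nn v)" .
  qed
next
  let ?M = "MC DIM('a)"
  have MA: "0 \<le> ?M \<alpha>" using MC_nonneg alpha by blast
  have MD: "0 \<le> ?M (2 * \<delta>1)" using MC_nonneg d1 by simp
  show "\<exists>Q\<ge>0. \<forall>v x z. P v \<longrightarrow> 0 < norm z \<longrightarrow> norm z \<le> 1 \<longrightarrow>
        (\<integral>\<^sup>+ h. ennreal (\<bar>v (x + z + h) - v (x + z) - (v (x + h) - v x)\<bar> * Kf \<phi> h) \<partial>lborel)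
          \<le> ennreal (Q * \<psi> (norm z) * Nn v)"
  proof (rule exI[of _ "2 / c\<psi> * ?M \<alpha> + 2 / a1 * ?M (2 * \<delta>1)"], intro conjI allI impI)
    show "0 \<le> 2 / c\<psi> * ?M \<alpha> + 2 / a1 * ?M (2 * \<delta>1)" using MA MD cpsi a1 by simp
    fix v x z assume Pv: "P v" and z: "0 < norm (z::'a)" "norm z \<le> 1"
    have N: "0 \<le> Nn v"
      and Hv: "\<And>x h. 0 < norm h \<Longrightarrow> norm h \<le> 1 \<Longrightarrow> \<bar>v (x + h) - v x\<bar> \<le> Nn v * (\<phi> (norm h) * \<psi> (norm h))"
      using H[OF Pv] by auto
    have "(\<integral>\<^sup>+ h. ennreal (\<bar>v (x + z + h) - v (x + z) - (v (x + h) - v x)\<bar> * Kf \<phi> h) \<partial>lborel)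
     \<le> ennreal ((2 * Nn v / c\<psi> * ?M \<alpha> + 2 * Nn v / a1 * ?M (2 * \<delta>1)) * \<psi> (norm z))"
      by (rule ord0_Q[OF Hv N z])
    also have "(2 * Nn v / c\<psi> * ?M \<alpha> + 2 * Nn v / a1 * ?M (2 * \<delta>1)) * \<psi> (norm z)
       = (2 / c\<psi> * ?M \<alpha> + 2 / a1 * ?M (2 * \<delta>1)) * \<psi> (norm z) * Nn v" by (simp add: field_simps)
    finally show "(\<integral>\<^sup>+ h. ennreal (\<bar>v (x + z + h) - v (x + z) - (v (x + h) - v x)\<bar> * Kf \<phi> h) \<partial>lborel)
     \<le> ennreal ((2 / c\<psi> * ?M \<alpha> + 2 / a1 * ?M (2 * \<delta>1)) * \<psi> (norm z) * Nn v)" .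
  qed
next
  fix e :: real assume e: "0 < e"
  obtain \<eta> where eta: "0 < \<eta>" "\<eta> \<le> 1" and et: "\<And>t. 0 < t \<and> t \<le> \<eta> \<Longrightarrow> t powr (2 * \<delta>1) \<le> e * a1"
    using pow_small[of "2 * \<delta>1" "e * a1"] d1 e a1 by auto
  show "\<exists>\<eta>>0. \<eta> \<le> 1 \<and> (\<forall>v y z. P v \<longrightarrow> 0 < norm z \<longrightarrow> norm z \<le> \<eta> \<longrightarrow>
        \<bar>v (y + z) - v y\<bar> \<le> e * \<psi> (norm z) * Nn v)"
  proof (rule exI[of _ \<eta>], intro conjI allI impI)
    show "0 < \<eta>" "\<eta> \<le> 1" by (fact eta)+
    fix v y z assume Pv: "P v" and z: "0 < norm (z::'a)" "norm z \<le> \<eta>"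
    have N: "0 \<le> Nn v"
      and Hv: "\<And>x h. 0 < norm h \<Longrightarrow> norm h \<le> 1 \<Longrightarrow> \<bar>v (x + h) - v x\<bar> \<le> Nn v * (\<phi> (norm h) * \<psi> (norm h))"
      using H[OF Pv] by auto
    have z1: "norm z \<le> 1" using z eta by linarith
    have "\<phi> (norm z) \<le> norm z powr (2 * \<delta>1) / a1" using phi_le_pow z z1 by blast
    also have "\<dots> \<le> e" using et[of "norm z"] z a1 by (simp add: field_simps)
    finally have pe: "\<phi> (norm z) \<le> e" .
    have "\<bar>v (y + z) - v y\<bar> \<le> Nn v * (\<phi> (norm z) * \<psi> (norm z))" using Hv z z1 by blast
    also have "\<dots> \<le> Nn v * (e * \<psi> (norm z))"
      using pe psi_pos[of "norm z"] z z1 N by (intro mult_left_mono mult_right_mono) auto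
    finally show "\<bar>v (y + z) - v y\<bar> \<le> e * \<psi> (norm z) * Nn v" by (simp add: mult_ac)
  qed
qed

end


context setting begin

lemma rho_phi:
  assumes "0 < t" "t \<le> 1"
  shows "t / \<phi> t \<le> C\<gamma> * t powr (1 - \<gamma>)"
proof -
  have "\<phi> 1 / 1 powr \<gamma> \<le> C\<gamma> * (\<phi> t / t powr \<gamma>)" using phi_ad assms by blast
  hence "t powr \<gamma> \<le> C\<gamma> * \<phi> t" using assms phi1 by (simp add: field_simps)
  moreover have "t = t powr \<gamma> * t powr (1 - \<gamma>)" using assms by (simp add: powr_add[symmetric])
  moreover have "0 < \<phi> t" using phi_pos assms by simp
  ultimately show ?thesis
    by (smt (verit, best) divide_le_eq mult.commute mult_right_mono powr_ge_zero mult.assoc)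
qed

lemma facts1:
  fixes P :: "('a::euclidean_space \<Rightarrow> real) \<Rightarrow> bool" and V0 Nn :: "('a \<Rightarrow> real) \<Rightarrow> real"
  assumes H: "\<And>v. P v \<Longrightarrow> (\<forall>y. \<bar>v y\<bar> \<le> V0 v) \<and> 0 \<le> Nn v \<and>
      (\<forall>i y t. i \<in> Basis \<longrightarrow> ((\<lambda>t. v (y + t *\<^sub>R i)) has_real_derivative partial_deriv v i (y + t *\<^sub>R i)) (at t)) \<and>
      (\<forall>i y. i \<in> Basis \<longrightarrow> \<bar>partial_deriv v i y\<bar> \<le> Nn v) \<and>
      (\<forall>i y z. i \<in> Basis \<longrightarrow> 0 < norm z \<longrightarrow> norm z \<le> 1 \<longrightarrow>
         \<bar>partial_deriv v i (y + z) - partial_deriv v i y\<bar> \<le> Nn v * (\<phi> (norm z) * \<psi> (norm z)) / norm z)"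
  shows "\<And>e. 0 < e \<Longrightarrow> \<exists>A\<ge>0. \<forall>v x. P v \<longrightarrow>
        (\<integral>\<^sup>+ h. ennreal (\<bar>v (x + h) - v x\<bar> * Kf \<phi> h) \<partial>lborel) \<le> ennreal (A * V0 v + e * Nn v)"
    and "\<exists>Q\<ge>0. \<forall>v x z. P v \<longrightarrow> 0 < norm z \<longrightarrow> norm z \<le> 1 \<longrightarrow>
        (\<integral>\<^sup>+ h. ennreal (\<bar>v (x + z + h) - v (x + z) - (v (x + h) - v x)\<bar> * Kf \<phi> h) \<partial>lborel)
          \<le> ennreal (Q * \<psi> (norm z) * Nn v)"
    and "\<And>e. 0 < e \<Longrightarrow> \<exists>\<eta>>0. \<eta> \<le> 1 \<and> (\<forall>v y z. P v \<longrightarrow> 0 < norm z \<longrightarrow> norm z \<le> \<eta> \<longrightarrow>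
        \<bar>v (y + z) - v y\<bar> \<le> e * \<psi> (norm z) * Nn v)"
proof -
  let ?M = "MC DIM('a)"
  let ?d = "real DIM('a)"
  have MG: "0 \<le> ?M (1 - \<gamma>)" using MC_nonneg gamma by simp
  have MD: "0 \<le> ?M (2 * \<delta>1)" using MC_nonneg d1 by simp
  fix e :: real assume e: "0 < e"
  define K0 where "K0 = ?d * C\<gamma> * C\<gamma> * ?M (1 - \<gamma>) + 1"
  have "0 \<le> ?d * C\<gamma> * C\<gamma> * ?M (1 - \<gamma>)" using Cgamma MG by simp
  hence K0: "0 < K0" by (simp add: K0_def)
  obtain \<rho> where rho: "0 < \<rho>" "\<rho> \<le> 1" and rt: "\<And>t. 0 < t \<and> t \<le> \<rho> \<Longrightarrow> t powr (1 - \<gamma>) \<le> e / K0"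
    using pow_small[of "1 - \<gamma>" "e / K0"] gamma e K0 by auto
  have prho: "0 < \<phi> \<rho>" using phi_pos rho by auto
  have ps: "?d * C\<gamma> * \<rho> / \<phi> \<rho> * ?M (1 - \<gamma>) \<le> e"
  proof -
    have "?d * C\<gamma> * \<rho> / \<phi> \<rho> * ?M (1 - \<gamma>) = ?d * C\<gamma> * ?M (1 - \<gamma>) * (\<rho> / \<phi> \<rho>)" by simp
    also have "\<dots> \<le> ?d * C\<gamma> * ?M (1 - \<gamma>) * (C\<gamma> * (e / K0))"
    proof (rule mult_left_mono)
      have "\<rho> / \<phi> \<rho> \<le> C\<gamma> * \<rho> powr (1 - \<gamma>)" by (rule rho_phi[OF rho])
      also have "\<dots> \<le> C\<gamma> * (e / K0)" using rt[of \<rho>] rho Cgamma by (intro mult_left_mono) auto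
      finally show "\<rho> / \<phi> \<rho> \<le> C\<gamma> * (e / K0)" .
    qed (use Cgamma MG in simp)
    also have "\<dots> = (K0 - 1) * (e / K0)" by (simp add: K0_def)
    also have "\<dots> \<le> e" using K0 e by (simp add: field_simps)
    finally show ?thesis .
  qed
  show "\<exists>A\<ge>0. \<forall>v x. P v \<longrightarrow>
        (\<integral>\<^sup>+ h. ennreal (\<bar>v (x + h) - v x\<bar> * Kf \<phi> h) \<partial>lborel) \<le> ennreal (A * V0 v + e * Nn v)"
  proof (rule exI[of _ "2 / (a1 * \<phi> \<rho>) * ?M (2 * \<delta>1)"], intro conjI allI impI)
    show "0 \<le> 2 / (a1 * \<phi> \<rho>) * ?M (2 * \<delta>1)" using a1 prho MD by simp
    fix v x assume Pv: "P v"
    have Vb: "\<And>y. \<bar>v y\<bar> \<le> V0 v" and N: "0 \<le> Nn v"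
      and Dv: "\<And>i y t. i \<in> Basis \<Longrightarrow> ((\<lambda>t. v (y + t *\<^sub>R i)) has_real_derivative partial_deriv v i (y + t *\<^sub>R i)) (at t)"
      and Db: "\<And>i y. i \<in> Basis \<Longrightarrow> \<bar>partial_deriv v i y\<bar> \<le> Nn v"
      using H[OF Pv] by auto
    have "(\<integral>\<^sup>+ h. ennreal (\<bar>v (x + h) - v x\<bar> * Kf \<phi> h) \<partial>lborel)
      \<le> ennreal (?d * Nn v * C\<gamma> * \<rho> / \<phi> \<rho> * ?M (1 - \<gamma>) + 2 * V0 v / (a1 * \<phi> \<rho>) * ?M (2 * \<delta>1) + 0 * ?M 1)"
      by (rule ord1_J[OF Vb Dv Db N rho])
    also have "\<dots> \<le> ennreal (2 / (a1 * \<phi> \<rho>) * ?M (2 * \<delta>1) * V0 v + e * Nn v)"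
    proof (rule ennreal_leI)
      have "?d * Nn v * C\<gamma> * \<rho> / \<phi> \<rho> * ?M (1 - \<gamma>) = Nn v * (?d * C\<gamma> * \<rho> / \<phi> \<rho> * ?M (1 - \<gamma>))" by simp
      also have "\<dots> \<le> Nn v * e" using ps N by (rule mult_left_mono)
      finally show "?d * Nn v * C\<gamma> * \<rho> / \<phi> \<rho> * ?M (1 - \<gamma>) + 2 * V0 v / (a1 * \<phi> \<rho>) * ?M (2 * \<delta>1) + 0 * ?M 1
          \<le> 2 / (a1 * \<phi> \<rho>) * ?M (2 * \<delta>1) * V0 v + e * Nn v" by (simp add: mult_ac)
    qed
    finally show "(\<integral>\<^sup>+ h. ennreal (\<bar>v (x + h) - v x\<bar> * Kf \<phi> h) \<partial>lborel)
      \<le> ennreal (2 / (a1 * \<phi> \<rho>) * ?M (2 * \<delta>1) * V0 v + e * Nn v)" .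
  qed
next
  let ?M = "MC DIM('a)"
  let ?d = "real DIM('a)"
  have MG: "0 \<le> ?M (1 - \<gamma>)" using MC_nonneg gamma by simp
  have MB: "0 \<le> ?M (1 - \<beta>)" using MC_nonneg beta by simp
  have MD: "0 \<le> ?M (2 * \<delta>1)" using MC_nonneg d1 by simp
  let ?Q = "?d * C\<gamma> * ?M (1 - \<gamma>) + ?d * C\<beta> * ?M (1 - \<beta>) + 2 * ?d * C\<beta> / a1 * ?M (2 * \<delta>1)"
  show "\<exists>Q\<ge>0. \<forall>v x z. P v \<longrightarrow> 0 < norm z \<longrightarrow> norm z \<le> 1 \<longrightarrow>
        (\<integral>\<^sup>+ h. ennreal (\<bar>v (x + z + h) - v (x + z) - (v (x + h) - v x)\<bar> * Kf \<phi> h) \<partial>lborel)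
          \<le> ennreal (Q * \<psi> (norm z) * Nn v)"
  proof (rule exI[of _ ?Q], intro conjI allI impI)
    show "0 \<le> ?Q" using MG MB MD Cgamma Cbeta a1 by simp
    fix v x z assume Pv: "P v" and z: "0 < norm (z::'a)" "norm z \<le> 1"
    have N: "0 \<le> Nn v"
      and Dv: "\<And>i y t. i \<in> Basis \<Longrightarrow> ((\<lambda>t. v (y + t *\<^sub>R i)) has_real_derivative partial_deriv v i (y + t *\<^sub>R i)) (at t)"
      and Db: "\<And>i y. i \<in> Basis \<Longrightarrow> \<bar>partial_deriv v i y\<bar> \<le> Nn v"
      and Dh: "\<And>i y z. i \<in> Basis \<Longrightarrow> 0 < norm z \<Longrightarrow> norm z \<le> 1 \<Longrightarrow>
         \<bar>partial_deriv v i (y + z) - partial_deriv v i y\<bar> \<le> Nn v * (\<phi> (norm z) * \<psi> (norm z)) / norm z"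
      using H[OF Pv] by auto
    have "(\<integral>\<^sup>+ h. ennreal (\<bar>v (x + z + h) - v (x + z) - (v (x + h) - v x)\<bar> * Kf \<phi> h) \<partial>lborel)
     \<le> ennreal ((?d * Nn v * C\<gamma> * ?M (1 - \<gamma>) + ?d * Nn v * C\<beta> * ?M (1 - \<beta>)
          + 2 * ?d * Nn v * C\<beta> / a1 * ?M (2 * \<delta>1)) * \<psi> (norm z))"
      by (rule ord1_Q[OF Dv Db Dh N z])
    also have "(?d * Nn v * C\<gamma> * ?M (1 - \<gamma>) + ?d * Nn v * C\<beta> * ?M (1 - \<beta>)
          + 2 * ?d * Nn v * C\<beta> / a1 * ?M (2 * \<delta>1)) * \<psi> (norm z) = ?Q * \<psi> (norm z) * Nn v"
      by (simp add: field_simps)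
    finally show "(\<integral>\<^sup>+ h. ennreal (\<bar>v (x + z + h) - v (x + z) - (v (x + h) - v x)\<bar> * Kf \<phi> h) \<partial>lborel)
     \<le> ennreal (?Q * \<psi> (norm z) * Nn v)" .
  qed
next
  let ?d = "real DIM('a)"
  fix e :: real assume e: "0 < e"
  define K1 where "K1 = ?d * C\<beta> + 1"
  have "0 \<le> ?d * C\<beta>" using Cbeta by simp
  hence K1: "0 < K1" by (simp add: K1_def)
  obtain \<eta> where eta: "0 < \<eta>" "\<eta> \<le> 1" and et: "\<And>t. 0 < t \<and> t \<le> \<eta> \<Longrightarrow> t powr (1 - \<beta>) \<le> e / K1"
    using pow_small[of "1 - \<beta>" "e / K1"] beta e K1 by auto
  show "\<exists>\<eta>>0. \<eta> \<le> 1 \<and> (\<forall>v y z. P v \<longrightarrow> 0 < norm z \<longrightarrow> norm z \<le> \<eta> \<longrightarrow>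
        \<bar>v (y + z) - v y\<bar> \<le> e * \<psi> (norm z) * Nn v)"
  proof (rule exI[of _ \<eta>], intro conjI allI impI)
    show "0 < \<eta>" "\<eta> \<le> 1" by (fact eta)+
    fix v y z assume Pv: "P v" and z: "0 < norm (z::'a)" "norm z \<le> \<eta>"
    have N: "0 \<le> Nn v"
      and Dv: "\<And>i y t. i \<in> Basis \<Longrightarrow> ((\<lambda>t. v (y + t *\<^sub>R i)) has_real_derivative partial_deriv v i (y + t *\<^sub>R i)) (at t)"
      and Db: "\<And>i y. i \<in> Basis \<Longrightarrow> \<bar>partial_deriv v i y\<bar> \<le> Nn v"
      using H[OF Pv] by auto
    have z1: "norm z \<le> 1" using z eta by linarith
    have pz: "0 < \<psi> (norm z)" using psi_pos z z1 by auto
    have "?d * C\<beta> * norm z powr (1 - \<beta>) \<le> ?d * C\<beta> * (e / K1)"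
      using et[of "norm z"] z Cbeta by (intro mult_left_mono) auto
    also have "\<dots> \<le> e" using K1 e Cbeta by (simp add: K1_def field_simps)
    finally have te: "?d * C\<beta> * norm z powr (1 - \<beta>) \<le> e" .
    have "\<bar>v (y + z) - v y\<bar> \<le> Nn v * \<psi> (norm z) * (?d * C\<beta> * norm z powr (1 - \<beta>))"
      by (rule ord1_far[OF Dv Db N z(1) z1])
    also have "\<dots> \<le> Nn v * \<psi> (norm z) * e" using te N pz by (intro mult_left_mono) auto
    finally show "\<bar>v (y + z) - v y\<bar> \<le> e * \<psi> (norm z) * Nn v" by (simp add: mult_ac)
  qed
qed

end


lemma mi0: "multi_indices 0 = {[]::'a::euclidean_space list}" by (auto simp: multi_indices_def)

lemma mi1: "multi_indices 1 = (\<lambda>i. [i]) ` (Basis::'a::euclidean_space set)"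
proof -
  have "\<gamma> \<in> multi_indices 1 \<longleftrightarrow> \<gamma> \<in> (\<lambda>i. [i]) ` (Basis::'a set)" for \<gamma> :: "'a list"
    by (cases \<gamma>) (auto simp: multi_indices_def)
  thus ?thesis by blast
qed

lemma C0_abs:
  assumes "bounded (range (f::'a \<Rightarrow> real))"
  shows "\<bar>f y\<bar> \<le> C0_norm f"
proof -
  obtain B where "\<forall>x\<in>range f. \<bar>x\<bar> \<le> B" using assms unfolding bounded_real by blast
  hence "bdd_above (range (\<lambda>x. \<bar>f x\<bar>))" by (auto intro: bdd_aboveI)
  thus ?thesis unfolding C0_norm_def by (rule cSUP_upper[OF UNIV_I])
qed

lemma seminorm_facts:
  fixes f :: "'a::euclidean_space \<Rightarrow> real"
  assumes bdd: "bdd_above (holder_quotients g j f)" and gpos: "\<And>r. 0 < r \<Longrightarrow> r \<le> 1 \<Longrightarrow> 0 < g r"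
  shows "0 \<le> holder_seminorm g j f"
    and "\<And>x h. 0 < norm h \<Longrightarrow> norm h \<le> 1 \<Longrightarrow> \<bar>f (x + h) - f x\<bar> \<le> holder_seminorm g j f * (g (norm h) * inverse (norm h ^ j))"
proof -
  have up: "\<bar>f (x + h) - f x\<bar> / (g (norm h) * inverse (norm h ^ j)) \<le> holder_seminorm g j f"
    if h: "0 < norm h" "norm h \<le> 1" for x h
    unfolding holder_seminorm_def
    by (rule cSup_upper[OF _ bdd]) (use h in \<open>auto simp: holder_quotients_def\<close>)
  obtain h :: 'a where h: "norm h = 1" using exists_unit by blast
  have "0 \<le> \<bar>f (0 + h) - f 0\<bar> / (g (norm h) * inverse (norm h ^ j))" using gpos[of 1] h by simp
  also have "\<dots> \<le> holder_seminorm g j f" using up[of h 0] h by simp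
  finally show "0 \<le> holder_seminorm g j f" .
  fix x h :: 'a assume h: "0 < norm h" "norm h \<le> 1"
  have pos: "0 < g (norm h) * inverse (norm h ^ j)" using gpos h by simp
  show "\<bar>f (x + h) - f x\<bar> \<le> holder_seminorm g j f * (g (norm h) * inverse (norm h ^ j))"
    using up[OF h, of x] pos by (simp add: divide_le_eq)
qed

lemma inC0_facts:
  fixes v :: "'a::euclidean_space \<Rightarrow> real"
  assumes ho: "holder_order g = 0" and inC: "in_C g v" and gpos: "\<And>r. 0 < r \<Longrightarrow> r \<le> 1 \<Longrightarrow> 0 < g r"
  shows "continuous_on UNIV v \<and> (\<forall>y. \<bar>v y\<bar> \<le> C0_norm v) \<and> C0_norm v \<le> C_norm g v \<and> 0 \<le> C_norm g v \<and>
    (\<forall>x h. 0 < norm h \<and> norm h \<le> 1 \<longrightarrow> \<bar>v (x + h) - v x\<bar> \<le> C_norm g v * g (norm h))"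
proof -
  have i: "(\<forall>\<gamma>. set \<gamma> \<subseteq> Basis \<and> length \<gamma> \<le> 0 \<longrightarrow>
        continuous_on UNIV (Dmulti \<gamma> v) \<and> bounded (range (Dmulti \<gamma> v)) \<and>
        (length \<gamma> < 0 \<longrightarrow> (\<forall>i\<in>Basis. has_partial (Dmulti \<gamma> v) i))) \<and>
     (\<forall>\<gamma>\<in>{[]}. bdd_above (holder_quotients g 0 (Dmulti \<gamma> v)))"
    using inC unfolding in_C_def ho mi0 .
  have "continuous_on UNIV (Dmulti [] v) \<and> bounded (range (Dmulti [] v))"
    using conjunct1[OF i] by simp
  hence cont: "continuous_on UNIV v" and bnd: "bounded (range v)" by simp_all
  have bdd: "bdd_above (holder_quotients g 0 v)" using conjunct2[OF i] by simp
  have ab: "\<And>y. \<bar>v y\<bar> \<le> C0_norm v" using C0_abs[OF bnd] by blast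
  have c0: "0 \<le> C0_norm v" using ab[of 0] by linarith
  note sf = seminorm_facts[OF bdd gpos]
  have CN: "C_norm g v = C0_norm v + holder_seminorm g 0 v"
    unfolding C_norm_def ho by (simp add: Dj_norm_def mi0)
  show ?thesis
  proof (intro conjI allI impI)
    show "continuous_on UNIV v" by (fact cont)
    show "\<bar>v y\<bar> \<le> C0_norm v" for y by (fact ab)
    show "C0_norm v \<le> C_norm g v" using CN sf(1) by simp
    show "0 \<le> C_norm g v" using CN sf(1) c0 by simp
    fix x h :: 'a assume h: "0 < norm h \<and> norm h \<le> 1"
    have "\<bar>v (x + h) - v x\<bar> \<le> holder_seminorm g 0 v * g (norm h)" using sf(2)[of h x] h by simp
    also have "\<dots> \<le> C_norm g v * g (norm h)"
      using CN c0 gpos[of "norm h"] h by (intro mult_right_mono) auto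
    finally show "\<bar>v (x + h) - v x\<bar> \<le> C_norm g v * g (norm h)" .
  qed
qed

lemma partial_deriv_has:
  fixes v :: "'a::euclidean_space \<Rightarrow> real"
  assumes hp: "has_partial v i"
  shows "((\<lambda>t. v (y + t *\<^sub>R i)) has_real_derivative partial_deriv v i (y + t0 *\<^sub>R i)) (at t0)"
proof -
  let ?w = "y + t0 *\<^sub>R i"
  have "(\<lambda>s. v (?w + s *\<^sub>R i)) differentiable (at 0)" using hp unfolding has_partial_def by blast
  hence d: "((\<lambda>s. v (?w + s *\<^sub>R i)) has_real_derivative partial_deriv v i ?w) (at 0)"
    unfolding partial_deriv_def by (simp add: DERIV_deriv_iff_real_differentiable)
  have e: "(\<lambda>s. v (y + (s + t0) *\<^sub>R i)) = (\<lambda>s. v (?w + s *\<^sub>R i))"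
    by (simp add: scaleR_add_left add_ac)
  have "((\<lambda>t. v (y + t *\<^sub>R i)) has_real_derivative partial_deriv v i ?w) (at (0 + t0))"
    unfolding DERIV_shift e by (rule d)
  thus ?thesis by simp
qed

lemma inC1_facts:
  fixes v :: "'a::euclidean_space \<Rightarrow> real"
  assumes ho: "holder_order g = 1" and inC: "in_C g v" and gpos: "\<And>r. 0 < r \<Longrightarrow> r \<le> 1 \<Longrightarrow> 0 < g r"
  shows "continuous_on UNIV v \<and> (\<forall>y. \<bar>v y\<bar> \<le> C0_norm v) \<and> C0_norm v \<le> C_norm g v \<and> 0 \<le> C_norm g v \<and>
    (\<forall>i y t. i \<in> Basis \<longrightarrow> ((\<lambda>t. v (y + t *\<^sub>R i)) has_real_derivative partial_deriv v i (y + t *\<^sub>R i)) (at t)) \<and>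
    (\<forall>i y. i \<in> Basis \<longrightarrow> \<bar>partial_deriv v i y\<bar> \<le> C_norm g v) \<and>
    (\<forall>i y z. i \<in> Basis \<longrightarrow> 0 < norm z \<longrightarrow> norm z \<le> 1 \<longrightarrow>
       \<bar>partial_deriv v i (y + z) - partial_deriv v i y\<bar> \<le> C_norm g v * g (norm z) / norm z)"
proof -
  have A: "\<And>\<gamma>. set \<gamma> \<subseteq> Basis \<Longrightarrow> length \<gamma> \<le> 1 \<Longrightarrow> continuous_on UNIV (Dmulti \<gamma> v) \<and> bounded (range (Dmulti \<gamma> v)) \<and>
        (length \<gamma> < 1 \<longrightarrow> (\<forall>i\<in>Basis. has_partial (Dmulti \<gamma> v) i))"
    and B: "\<And>\<gamma>. \<gamma> \<in> multi_indices 1 \<Longrightarrow> bdd_above (holder_quotients g 1 (Dmulti \<gamma> v))"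
  proof -
    have i: "(\<forall>\<gamma>. set \<gamma> \<subseteq> Basis \<and> length \<gamma> \<le> 1 \<longrightarrow>
        continuous_on UNIV (Dmulti \<gamma> v) \<and> bounded (range (Dmulti \<gamma> v)) \<and>
        (length \<gamma> < 1 \<longrightarrow> (\<forall>i\<in>Basis. has_partial (Dmulti \<gamma> v) i))) \<and>
      (\<forall>\<gamma>\<in>multi_indices 1. bdd_above (holder_quotients g 1 (Dmulti \<gamma> v)))"
      using inC unfolding in_C_def ho .
    show "\<And>\<gamma>. set \<gamma> \<subseteq> Basis \<Longrightarrow> length \<gamma> \<le> 1 \<Longrightarrow> continuous_on UNIV (Dmulti \<gamma> v) \<and> bounded (range (Dmulti \<gamma> v)) \<and>
        (length \<gamma> < 1 \<longrightarrow> (\<forall>i\<in>Basis. has_partial (Dmulti \<gamma> v) i))"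
      using conjunct1[OF i] by blast
    show "\<And>\<gamma>. \<gamma> \<in> multi_indices 1 \<Longrightarrow> bdd_above (holder_quotients g 1 (Dmulti \<gamma> v))"
      using bspec[OF conjunct2[OF i]] by assumption
  qed
  have cont: "continuous_on UNIV v" and bnd: "bounded (range v)" and hp: "\<And>i. i \<in> Basis \<Longrightarrow> has_partial v i"
    using A[of "[]"] by auto
  have bndi: "bounded (range (partial_deriv v i))" if "i \<in> Basis" for i
    using A[of "[i]"] that by simp
  have bddi: "bdd_above (holder_quotients g 1 (partial_deriv v i))" if i: "i \<in> Basis" for i
  proof -
    have "[i] \<in> multi_indices 1" unfolding mi1 using i by (rule imageI)
    from B[OF this] show ?thesis by simp
  qed
  have ab: "\<And>y. \<bar>v y\<bar> \<le> C0_norm v" using C0_abs[OF bnd] by blast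
  have c0: "0 \<le> C0_norm v" using ab[of 0] by linarith
  have abi: "\<bar>partial_deriv v i y\<bar> \<le> C0_norm (partial_deriv v i)" if "i \<in> Basis" for i y
    by (rule C0_abs[OF bndi[OF that]])
  have c0i: "0 \<le> C0_norm (partial_deriv v i)" if "i \<in> Basis" for i
    using abi[OF that, of 0] by linarith
  have sfi: "0 \<le> holder_seminorm g 1 (partial_deriv v i)" if "i \<in> Basis" for i
    by (rule seminorm_facts(1)[OF bddi[OF that] gpos])
  have D1: "Dj_norm 1 v = Max ((\<lambda>i. C0_norm (partial_deriv v i)) ` Basis)"
    unfolding Dj_norm_def mi1 by (simp add: image_image)
  have MS: "Max ((\<lambda>\<gamma>. holder_seminorm g 1 (Dmulti \<gamma> v)) ` multi_indices 1) = Max ((\<lambda>i. holder_seminorm g 1 (partial_deriv v i)) ` Basis)"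
    unfolding mi1 by (simp add: image_image)
  have CN: "C_norm g v = C0_norm v + Dj_norm 1 v + Max ((\<lambda>i. holder_seminorm g 1 (partial_deriv v i)) ` Basis)"
    unfolding C_norm_def ho MS by (simp add: Dj_norm_def mi0)
  obtain b :: 'a where b: "b \<in> Basis" using nonempty_Basis by blast
  have D1ge: "\<And>i. i \<in> Basis \<Longrightarrow> C0_norm (partial_deriv v i) \<le> Dj_norm 1 v" unfolding D1 by (rule Max_ge) auto
  have MSge: "\<And>i. i \<in> Basis \<Longrightarrow> holder_seminorm g 1 (partial_deriv v i) \<le> Max ((\<lambda>i. holder_seminorm g 1 (partial_deriv v i)) ` Basis)"
    by (rule Max_ge) auto
  have D1n: "0 \<le> Dj_norm 1 v" using D1ge[OF b] c0i[OF b] by linarith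
  have MSn: "0 \<le> Max ((\<lambda>i. holder_seminorm g 1 (partial_deriv v i)) ` Basis)" using MSge[OF b] sfi[OF b] by linarith
  show ?thesis
  proof (intro conjI allI impI)
    show "continuous_on UNIV v" by (fact cont)
    show "\<bar>v y\<bar> \<le> C0_norm v" for y by (fact ab)
    show "C0_norm v \<le> C_norm g v" using CN D1n MSn by simp
    show "0 \<le> C_norm g v" using CN D1n MSn c0 by simp
    show "((\<lambda>t. v (y + t *\<^sub>R i)) has_real_derivative partial_deriv v i (y + t *\<^sub>R i)) (at t)" if "i \<in> Basis" for i y t
      using partial_deriv_has[OF hp[OF that]] by blast
    show "\<bar>partial_deriv v i y\<bar> \<le> C_norm g v" if i: "i \<in> Basis" for i y
      using abi[OF i, of y] D1ge[OF i] CN c0 MSn by linarith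
    fix i y z :: 'a assume i: "i \<in> Basis" and z: "0 < norm z" "norm z \<le> 1"
    have "\<bar>partial_deriv v i (y + z) - partial_deriv v i y\<bar> \<le> holder_seminorm g 1 (partial_deriv v i) * (g (norm z) * inverse (norm z ^ 1))"
      using seminorm_facts(2)[OF bddi[OF i] gpos z] by blast
    also have "\<dots> \<le> C_norm g v * (g (norm z) * inverse (norm z ^ 1))"
      using MSge[OF i] CN c0 D1n gpos[of "norm z"] z by (intro mult_right_mono) auto
    finally show "\<bar>partial_deriv v i (y + z) - partial_deriv v i y\<bar> \<le> C_norm g v * g (norm z) / norm z"
      by (simp add: divide_inverse mult.assoc)
  qed
qed


lemma ho_zero:
  assumes "0 < lower_index g" "lower_index g < 1"
  shows "holder_order g = 0"
proof -
  obtain m where m: "lower_index g = ereal m" using assms by (cases "lower_index g") auto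
  have "0 < m" "m < 1" using assms m by auto
  hence "\<lceil>m\<rceil> = 1" by (simp add: ceiling_eq_iff)
  thus ?thesis by (simp add: holder_order_def m)
qed

lemma ho_one:
  assumes "1 < lower_index g" "lower_index g < 2"
  shows "holder_order g = 1"
proof -
  obtain m where m: "lower_index g = ereal m" using assms by (cases "lower_index g") auto
  have "1 < m" "m < 2" using assms m by auto
  hence "\<lceil>m\<rceil> = 2" by (simp add: ceiling_eq_iff)
  thus ?thesis by (simp add: holder_order_def m)
qed

theorem lemma4p4:
  fixes \<psi> \<phi> :: "real \<Rightarrow> real"
    and a :: "'a::euclidean_space \<Rightarrow> 'a \<Rightarrow> real"
    and \<Lambda>1 \<Lambda>2 \<Lambda>3 :: real
  assumes psi: "admissible_modulus \<psi>"
    and phi: "admissible_order_function \<phi>"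
    and I_psi: "0 < lower_index \<psi>" "upper_index \<psi> < 1"
    and M_phi: "upper_index \<phi> < 1"
    and I_phipsi: "0 < lower_index (\<lambda>r. \<phi> r * \<psi> r)" "upper_index (\<lambda>r. \<phi> r * \<psi> r) < 2"
    and no_nat: "\<forall>n::nat. 1 \<le> n \<longrightarrow>
        \<not> (lower_index (\<lambda>r. \<phi> r * \<psi> r) \<le> ereal (real n) \<and> ereal (real n) \<le> upper_index (\<lambda>r. \<phi> r * \<psi> r))"
    and max_lt: "max (upper_index \<phi>) (upper_index \<psi>) < lower_index (\<lambda>r. \<phi> r * \<psi> r)"
    and Lam: "0 < \<Lambda>1" "\<Lambda>1 \<le> \<Lambda>2" "1 \<le> \<Lambda>3"
    and a_range: "\<forall>x h. \<Lambda>1 \<le> a x h \<and> a x h \<le> \<Lambda>2"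
    and a_meas: "\<forall>x. (\<lambda>h. a x h) \<in> borel_measurable lborel"
    and a_cont: "\<forall>z. 0 < norm z \<and> norm z \<le> 1 \<longrightarrow>
        (\<forall>x h. 0 < norm h \<longrightarrow> \<bar>a (x + z) h - a x h\<bar> \<le> \<Lambda>3 * \<psi> (norm z))"
  shows "\<forall>\<epsilon>>0. \<exists>r C. 0 < r \<and> r < 1/4 \<and> 0 < C \<and>
     (\<forall>x0 v. in_C (\<lambda>r. \<phi> r * \<psi> r) v \<and> {x. v x \<noteq> 0} \<subseteq> ball x0 (2 * r) \<longrightarrow>
        in_C \<psi> (op_B a \<phi> x0 v) \<and>
        C_norm \<psi> (op_B a \<phi> x0 v) \<le> C * C0_norm v + \<epsilon> * C_norm (\<lambda>r. \<phi> r * \<psi> r) v)"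
proof -
  have psi_pos: "\<And>r. 0 < r \<Longrightarrow> r \<le> 1 \<Longrightarrow> 0 < \<psi> r" and psi1: "\<psi> 1 = 1"
    and psi_lim: "(\<psi> \<longlongrightarrow> 0) (at_right 0)"
    using psi unfolding admissible_modulus_def by auto
  have smooth: "smooth_on {0<..} \<phi>" and phi_pos: "\<And>r. 0 < r \<Longrightarrow> 0 < \<phi> r" and phi1: "\<phi> 1 = 1"
    and ex: "\<exists>\<delta>1 \<delta>2 a1 a2. 0 < \<delta>1 \<and> \<delta>1 \<le> \<delta>2 \<and> \<delta>2 < 1 \<and> 0 < a1 \<and> a1 \<le> 1 \<and> 1 \<le> a2 \<and>
        (\<forall>lam r. 1 \<le> lam \<and> 0 < r \<longrightarrow>
            a1 * lam powr (2 * \<delta>1) * \<phi> r \<le> \<phi> (lam * r) \<and>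
            \<phi> (lam * r) \<le> a2 * lam powr (2 * \<delta>2) * \<phi> r)"
    using phi unfolding admissible_order_function_def by auto
  obtain \<delta>1 a1 where d1: "0 < \<delta>1" and a1: "0 < a1"
    and scal: "\<And>lam r. 1 \<le> lam \<Longrightarrow> 0 < r \<Longrightarrow> a1 * lam powr (2 * \<delta>1) * \<phi> r \<le> \<phi> (lam * r)"
    using ex by blast
  have phic: "continuous_on {0<..} \<phi>"
  proof (intro continuous_at_imp_continuous_on ballI)
    fix x :: real assume "x \<in> {0<..}"
    hence "(deriv ^^ 0) \<phi> differentiable (at x)" using smooth unfolding smooth_on_def by blast
    hence "\<phi> differentiable (at x)" by simp
    thus "isCont \<phi> x" by (rule differentiable_imp_continuous_within)
  qed
  obtain \<alpha> where alpha: "0 < \<alpha>" and ai: "almost_increasing (\<lambda>r. \<psi> r / r powr \<alpha>)"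
    using lower_index_ex[of 0 \<psi>] I_psi(1) by (auto simp: zero_ereal_def)
  obtain c\<psi> where cpsi: "0 < c\<psi>" and psi_ai: "\<And>t s. 0 < t \<Longrightarrow> t \<le> s \<Longrightarrow> s \<le> 1 \<Longrightarrow> c\<psi> * (\<psi> t / t powr \<alpha>) \<le> \<psi> s / s powr \<alpha>"
    using ai unfolding almost_increasing_def by blast
  obtain \<beta> where beta: "\<beta> < 1" and ad: "almost_decreasing (\<lambda>r. \<psi> r / r powr \<beta>)"
    using upper_index_ex[of \<psi> 1] I_psi(2) by (auto simp: one_ereal_def)
  obtain C\<beta> where Cbeta: "1 \<le> C\<beta>" and psi_ad: "\<And>t s. 0 < t \<Longrightarrow> t \<le> s \<Longrightarrow> s \<le> 1 \<Longrightarrow> \<psi> s / s powr \<beta> \<le> C\<beta> * (\<psi> t / t powr \<beta>)"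
    using ad unfolding almost_decreasing_def by blast
  obtain \<gamma> where gamma: "\<gamma> < 1" and adp: "almost_decreasing (\<lambda>r. \<phi> r / r powr \<gamma>)"
    using upper_index_ex[of \<phi> 1] M_phi by (auto simp: one_ereal_def)
  obtain C\<gamma> where Cgamma: "1 \<le> C\<gamma>" and phi_ad: "\<And>t s. 0 < t \<Longrightarrow> t \<le> s \<Longrightarrow> s \<le> 1 \<Longrightarrow> \<phi> s / s powr \<gamma> \<le> C\<gamma> * (\<phi> t / t powr \<gamma>)"
    using adp unfolding almost_decreasing_def by blast
  interpret S: setting \<psi> \<phi> \<delta>1 a1 \<alpha> c\<psi> \<beta> C\<beta> \<gamma> C\<gamma>
    by unfold_locales (use psi_pos psi_lim phi_pos phi1 psi1 d1 a1 scal alpha cpsi psi_ai beta Cbeta psi_ad gamma Cgamma phi_ad in auto)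
  let ?g = "\<lambda>r. \<phi> r * \<psi> r"
  have gpos: "\<And>r. 0 < r \<Longrightarrow> r \<le> 1 \<Longrightarrow> 0 < ?g r" using phi_pos psi_pos by simp
  have ho_psi: "holder_order \<psi> = 0"
  proof (rule ho_zero)
    show "0 < lower_index \<psi>" by (fact I_psi(1))
    show "lower_index \<psi> < 1" using lower_le_upper[of \<psi>] psi_pos I_psi(2) by (auto intro: order.strict_trans1)
  qed
  have LU: "lower_index ?g \<le> upper_index ?g" by (rule lower_le_upper) (use gpos in auto)
  have nn1: "\<not> (lower_index ?g \<le> 1 \<and> 1 \<le> upper_index ?g)" using no_nat[rule_format, of 1] by (simp add: one_ereal_def)
  have fin: "\<forall>\<epsilon>>0. \<exists>r C. 0 < r \<and> r < 1/4 \<and> 0 < C \<and>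
     (\<forall>x0 v. in_C ?g v \<and> {x. v x \<noteq> 0} \<subseteq> ball x0 (2 * r) \<longrightarrow>
        in_C \<psi> (op_B a \<phi> x0 v) \<and>
        C_norm \<psi> (op_B a \<phi> x0 v) \<le> C * C0_norm v + \<epsilon> * C_norm ?g v)"
    if P0: "\<And>v. in_C ?g (v::'a \<Rightarrow> real) \<Longrightarrow> continuous_on UNIV v \<and> (\<forall>y. \<bar>v y\<bar> \<le> C0_norm v) \<and> C0_norm v \<le> C_norm ?g v"
    and F1: "\<And>e. 0 < e \<Longrightarrow> \<exists>A\<ge>0. \<forall>(v::'a \<Rightarrow> real) x. in_C ?g v \<longrightarrow>
        (\<integral>\<^sup>+ h. ennreal (\<bar>v (x + h) - v x\<bar> * Kf \<phi> h) \<partial>lborel) \<le> ennreal (A * C0_norm v + e * C_norm ?g v)"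
    and F2: "\<exists>Q\<ge>0. \<forall>(v::'a \<Rightarrow> real) x z. in_C ?g v \<longrightarrow> 0 < norm z \<longrightarrow> norm z \<le> 1 \<longrightarrow>
        (\<integral>\<^sup>+ h. ennreal (\<bar>v (x + z + h) - v (x + z) - (v (x + h) - v x)\<bar> * Kf \<phi> h) \<partial>lborel)
          \<le> ennreal (Q * \<psi> (norm z) * C_norm ?g v)"
    and F3: "\<And>e. 0 < e \<Longrightarrow> \<exists>\<eta>>0. \<eta> \<le> 1 \<and> (\<forall>(v::'a \<Rightarrow> real) y z. in_C ?g v \<longrightarrow> 0 < norm z \<longrightarrow> norm z \<le> \<eta> \<longrightarrow>
        \<bar>v (y + z) - v y\<bar> \<le> e * \<psi> (norm z) * C_norm ?g v)"
  proof (intro allI impI)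
    fix \<epsilon> :: real assume eps: "0 < \<epsilon>"
    have ex: "\<exists>r C. 0 < r \<and> r < 1/4 \<and> 0 < C \<and> (\<forall>x0 v. in_C ?g v \<and> {x. v x \<noteq> 0} \<subseteq> ball x0 (2 * r) \<longrightarrow>
     (\<exists>S T. 0 \<le> T \<and> (\<forall>x. \<bar>op_B a \<phi> x0 v x\<bar> \<le> S) \<and>
        (\<forall>x z. 0 < norm z \<and> norm z \<le> 1 \<longrightarrow> \<bar>op_B a \<phi> x0 v (x + z) - op_B a \<phi> x0 v x\<bar> \<le> T * \<psi> (norm z)) \<and>
        S + T \<le> C * C0_norm v + \<epsilon> * C_norm ?g v))"
      by (rule S.assembly[where P = "in_C (\<lambda>r. \<phi> r * \<psi> r)"]) (fact phic Lam a_range a_meas a_cont P0 F1 F2 F3 eps)+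
    obtain r C where rC: "0 < r" "r < 1/4" "0 < C" and main: "\<forall>x0 v. in_C ?g v \<and> {x. v x \<noteq> 0} \<subseteq> ball x0 (2 * r) \<longrightarrow>
     (\<exists>S T. 0 \<le> T \<and> (\<forall>x. \<bar>op_B a \<phi> x0 v x\<bar> \<le> S) \<and>
        (\<forall>x z. 0 < norm z \<and> norm z \<le> 1 \<longrightarrow> \<bar>op_B a \<phi> x0 v (x + z) - op_B a \<phi> x0 v x\<bar> \<le> T * \<psi> (norm z)) \<and>
        S + T \<le> C * C0_norm v + \<epsilon> * C_norm ?g v)"
      using ex by blast
    show "\<exists>r C. 0 < r \<and> r < 1/4 \<and> 0 < C \<and>
     (\<forall>x0 v. in_C ?g v \<and> {x. v x \<noteq> 0} \<subseteq> ball x0 (2 * r) \<longrightarrow>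
        in_C \<psi> (op_B a \<phi> x0 v) \<and>
        C_norm \<psi> (op_B a \<phi> x0 v) \<le> C * C0_norm v + \<epsilon> * C_norm ?g v)"
    proof (rule exI[of _ r], rule exI[of _ C], intro conjI allI impI)
      show "0 < r" "r < 1/4" "0 < C" by (fact rC)+
      fix x0 :: 'a and v :: "'a \<Rightarrow> real"
      assume asm: "in_C ?g v \<and> {x. v x \<noteq> 0} \<subseteq> ball x0 (2 * r)"
      then obtain S T where T0: "0 \<le> T" and Sb: "\<forall>x. \<bar>op_B a \<phi> x0 v x\<bar> \<le> S"
        and Tb: "\<forall>x z. 0 < norm z \<and> norm z \<le> 1 \<longrightarrow> \<bar>op_B a \<phi> x0 v (x + z) - op_B a \<phi> x0 v x\<bar> \<le> T * \<psi> (norm z)"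
        and ST: "S + T \<le> C * C0_norm v + \<epsilon> * C_norm ?g v"
        using main by blast
      have h: "in_C \<psi> (op_B a \<phi> x0 v) \<and> C_norm \<psi> (op_B a \<phi> x0 v) \<le> S + T"
        by (rule holder0[OF ho_psi psi_lim psi_pos]) (use Sb Tb T0 in auto)
      show "in_C \<psi> (op_B a \<phi> x0 v)" using h by blast
      show "C_norm \<psi> (op_B a \<phi> x0 v) \<le> C * C0_norm v + \<epsilon> * C_norm ?g v" using h ST by linarith
    qed
  qed
  show ?thesis
  proof (cases "1 < lower_index ?g")
    case True
    have ho: "holder_order ?g = 1"
      by (rule ho_one) (use True LU I_phipsi(2) in \<open>auto intro: order.strict_trans1\<close>)
    have H: "\<And>v. in_C ?g (v::'a \<Rightarrow> real) \<Longrightarrow> (\<forall>y. \<bar>v y\<bar> \<le> C0_norm v) \<and> 0 \<le> C_norm ?g v \<and>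
      (\<forall>i y t. i \<in> Basis \<longrightarrow> ((\<lambda>t. v (y + t *\<^sub>R i)) has_real_derivative partial_deriv v i (y + t *\<^sub>R i)) (at t)) \<and>
      (\<forall>i y. i \<in> Basis \<longrightarrow> \<bar>partial_deriv v i y\<bar> \<le> C_norm ?g v) \<and>
      (\<forall>i y z. i \<in> Basis \<longrightarrow> 0 < norm z \<longrightarrow> norm z \<le> 1 \<longrightarrow>
         \<bar>partial_deriv v i (y + z) - partial_deriv v i y\<bar> \<le> C_norm ?g v * (\<phi> (norm z) * \<psi> (norm z)) / norm z)"
      using inC1_facts[OF ho _ gpos] by blast
    have P0: "\<And>v. in_C ?g (v::'a \<Rightarrow> real) \<Longrightarrow> continuous_on UNIV v \<and> (\<forall>y. \<bar>v y\<bar> \<le> C0_norm v) \<and> C0_norm v \<le> C_norm ?g v"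
      using inC1_facts[OF ho _ gpos] by blast
    show ?thesis by (rule fin[OF P0 S.facts1(1)[OF H] S.facts1(2)[OF H] S.facts1(3)[OF H]])
  next
    case False
    hence "lower_index ?g \<le> 1" by simp
    hence "upper_index ?g < 1" using nn1 by auto
    hence lt1: "lower_index ?g < 1" using LU by (auto intro: order.strict_trans1)
    have ho: "holder_order ?g = 0" by (rule ho_zero[OF I_phipsi(1) lt1])
    have H: "\<And>v. in_C ?g (v::'a \<Rightarrow> real) \<Longrightarrow> (\<forall>y. \<bar>v y\<bar> \<le> C0_norm v) \<and> 0 \<le> C_norm ?g v \<and>
      (\<forall>x h. 0 < norm h \<and> norm h \<le> 1 \<longrightarrow> \<bar>v (x + h) - v x\<bar> \<le> C_norm ?g v * (\<phi> (norm h) * \<psi> (norm h)))"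
      using inC0_facts[OF ho _ gpos] by blast
    have P0: "\<And>v. in_C ?g (v::'a \<Rightarrow> real) \<Longrightarrow> continuous_on UNIV v \<and> (\<forall>y. \<bar>v y\<bar> \<le> C0_norm v) \<and> C0_norm v \<le> C_norm ?g v"
      using inC0_facts[OF ho _ gpos] by blast
    show ?thesis by (rule fin[OF P0 S.facts0(1)[OF H] S.facts0(2)[OF H] S.facts0(3)[OF H]])
  qed
qed


end
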